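(* Let $\mathbf{X},\mathbf{Y},\mathbf{Z}$ be finite non-empty sets and let $(X_n,Y_n,Z_n)$, $n=1,2,\dots$, be an infinite sequence of random elements of $\mathbf{X}\times\mathbf{Y}\times\mathbf{Z}$ on a common probability space. Suppose there are a probability distribution $\pi$ on $\mathbf{Z}$ and probability distributions $q(\cdot\mid x,z)$ on $\mathbf{Y}$, $(x,z)\in\mathbf{X}\times\mathbf{Z}$, such that for every $n\ge1$, writing $\mathcal{H}_{n-1}:=\sigma\bigl((X_i,Y_i,Z_i):i<n\bigr)$: (i) conditionally on $\mathcal{H}_{n-1}$, $Z_n$ has distribution $\pi$; (ii) the conditional distribution of $X_n$ given $\mathcal{H}_{n-1}$ and $Z_n$ is arbitrary; (iii) conditionally on $\sigma(\mathcal{H}_{n-1},Z_n,X_n)$, $Y_n$ has distribution $q(\cdot\mid X_n,Z_n)$. Fix $\delta>0$, $\tilde x\in\mathbf{X}$, $y\in\mathbf{Y}$, and let $P(y\mid\mathrm{do}(\tilde x)):=\sum_{z\in\mathbf{Z}}q(y\mid\tilde x,z)\pi(z)$. For each $N\ge1$ let \[ m_N:=\sum_{z\in\mathbf{Z}}\check p_N(z)\,\check p_N(y\mid\tilde x,z), \] \[ h_N:=|\mathbf{Z}|\sqrt{\frac{2\ln\log_2\lfloor\!\lfloor N\rfloor\!\rfloor+\ln\frac{6.6|\mathbf{Z}|}{\delta}}{2\lfloor\!\lfloor N\rfloor\!\rfloor}}+\sum_{z\in\mathbf{Z}}\sqrt{\frac{2\ln\log_2\lfloor\!\lfloor\#_N\tilde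 x z\rfloor\!\rfloor+\ln\frac{6.6|\mathbf{Z}|}{\delta}}{2\lfloor\!\lfloor\#_N\tilde x z\rfloor\!\rfloor}}, \] with the convention $\ln\log_2 1:=\infty$. Then $\mathbb{P}\bigl(\forall N\ge1:\ P(y\mid\mathrm{do}(\tilde x))\in[m_N-h_N,m_N+h_N]\bigr)\ge1-\delta$.
   Context: This models the "strong interpretation" (decisions $X_n$ may depend on the whole past) of a repeated causal diagram in which $Z$ satisfies the back-door criterion relative to $(X,Y)$, with no fixed time horizon. Notation: for an integer $n\ge2$, $\lfloor\!\lfloor n\rfloor\!\rfloor$ is the largest $2^k$, $k\in\{1,2,\dots\}$, with $2^k\le n$; for $n<2$, $\lfloor\!\lfloor n\rfloor\!\rfloor:=1$. $\#_m z:=|\{n\in[m]:Z_n=z\}|$ and $\#_m\tilde x z:=|\{n\in[m]:(X_n,Z_n)=(\tilde x,z)\}|$. Estimates: $\check p_N(z):=\#_{\lfloor\!\lfloor N\rfloor\!\rfloor}z/\lfloor\!\lfloor N\rfloor\!\rfloor$, and \[ \check p_N(y\mid\tilde x,z):=\frac{|\{n\in[N]:\#_n\tilde x z\le\lfloor\!\lfloor\#_N\tilde x z\rfloor\!\rfloor,\ X_n=\tilde x,\ Y_n=y,\ Z_n=z\}|}{\lfloor\!\lfloor\#_N\tilde x z\rfloor\!\rfloor}, \] the fraction of the first $\lfloor\!\lfloor\#_N\tilde x z\rfloor\!\rfloor$ observations among the first $N$ with $(X_n,Z_n)=(\tilde x,z)$ for which $Y_n=y$ (its value is irrelevant when $h_N=\infty$).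 *)

theory Defs
  imports "HOL-Probability.Probability"
begin

text \<open>Time indices are 1-based: the observations are X n, Y n, Z n for n \<ge> 1;
  the values at index 0 are never used.\<close>

definition flr2 :: "nat \<Rightarrow> nat" where
  "flr2 n = (if n < 2 then 1 else 2 ^ (GREATEST k. 1 \<le> k \<and> 2 ^ k \<le> n))"

text \<open>History (X_i, Y_i, Z_i), 1 \<le> i < n; it generates H_{n-1}.\<close>
definition hist :: "(nat \<Rightarrow> 'w \<Rightarrow> 'x) \<Rightarrow> (nat \<Rightarrow> 'w \<Rightarrow> 'y) \<Rightarrow> (nat \<Rightarrow> 'w \<Rightarrow> 'z)
    \<Rightarrow> nat \<Rightarrow> 'w \<Rightarrow> ('x \<times> 'y \<times> 'z) list" where
  "hist X Y Z n \<omega> = map (\<lambda>i. (X i \<omega>, Y i \<omega>, Z i \<omega>)) [1..<n]"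

definition cnt_z :: "(nat \<Rightarrow> 'w \<Rightarrow> 'z) \<Rightarrow> nat \<Rightarrow> 'z \<Rightarrow> 'w \<Rightarrow> nat" where
  "cnt_z Z m z \<omega> = card {n \<in> {1..m}. Z n \<omega> = z}"

definition cnt_xz :: "(nat \<Rightarrow> 'w \<Rightarrow> 'x) \<Rightarrow> (nat \<Rightarrow> 'w \<Rightarrow> 'z) \<Rightarrow> nat \<Rightarrow> 'x \<Rightarrow> 'z \<Rightarrow> 'w \<Rightarrow> nat" where
  "cnt_xz X Z m x z \<omega> = card {n \<in> {1..m}. X n \<omega> = x \<and> Z n \<omega> = z}"

definition p_z_est :: "(nat \<Rightarrow> 'w \<Rightarrow> 'z) \<Rightarrow> nat \<Rightarrow> 'z \<Rightarrow> 'w \<Rightarrow> real" where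
  "p_z_est Z N z \<omega> = real (cnt_z Z (flr2 N) z \<omega>) / real (flr2 N)"

definition p_y_est :: "(nat \<Rightarrow> 'w \<Rightarrow> 'x) \<Rightarrow> (nat \<Rightarrow> 'w \<Rightarrow> 'y) \<Rightarrow> (nat \<Rightarrow> 'w \<Rightarrow> 'z)
    \<Rightarrow> nat \<Rightarrow> 'y \<Rightarrow> 'x \<Rightarrow> 'z \<Rightarrow> 'w \<Rightarrow> real" where
  "p_y_est X Y Z N y x z \<omega> =
     real (card {n \<in> {1..N}. cnt_xz X Z n x z \<omega> \<le> flr2 (cnt_xz X Z N x z \<omega>)
                             \<and> X n \<omega> = x \<and> Y n \<omega> = y \<and> Z n \<omega> = z})
     / real (flr2 (cnt_xz X Z N x z \<omega>))"

definition m_est :: "(nat \<Rightarrow> 'w \<Rightarrow> 'x) \<Rightarrow> (nat \<Rightarrow> 'w \<Rightarrow> 'y) \<Rightarrow> (nat \<Rightarrow> 'w \<Rightarrow> 'z::finite)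
    \<Rightarrow> nat \<Rightarrow> 'x \<Rightarrow> 'y \<Rightarrow> 'w \<Rightarrow> real" where
  "m_est X Y Z N x y \<omega> = (\<Sum>z\<in>UNIV. p_z_est Z N z \<omega> * p_y_est X Y Z N y x z \<omega>)"

text \<open>One radius term sqrt((2 ln log2 k + ln(6.6 c/delta)) / (2k)), with the
  convention ln log2 1 = infinity (k is always a value of flr2, so k = 1 or k \<ge> 2).\<close>
definition rad :: "real \<Rightarrow> nat \<Rightarrow> real \<Rightarrow> ereal" where
  "rad c k \<delta> = (if k = 1 then \<infinity>
     else ereal (sqrt ((2 * ln (log 2 (real k)) + ln (6.6 * c / \<delta>)) / (2 * real k))))"

definition h_est :: "(nat \<Rightarrow> 'w \<Rightarrow> 'x) \<Rightarrow> (nat \<Rightarrow> 'w \<Rightarrow> 'z::finite)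
    \<Rightarrow> real \<Rightarrow> nat \<Rightarrow> 'x \<Rightarrow> 'w \<Rightarrow> ereal" where
  "h_est X Z \<delta> N x \<omega> =
     ereal (real CARD('z)) * rad (real CARD('z)) (flr2 N) \<delta>
     + (\<Sum>z\<in>UNIV. rad (real CARD('z)) (flr2 (cnt_xz X Z N x z \<omega>)) \<delta>)"

end

theory Submission
  imports Defs
begin


lemma integral_fin:
  fixes f :: "'w \<Rightarrow> 'v" and \<phi> :: "'v \<Rightarrow> real"
  assumes fm: "f \<in> M \<rightarrow>\<^sub>M count_space UNIV" and fin: "finite A"
    and inA: "\<And>\<omega>. \<omega> \<in> space M \<Longrightarrow> f \<omega> \<in> A" and fm2: "finite_measure M"
  shows "(\<integral>\<omega>. \<phi> (f \<omega>) \<partial>M) = (\<Sum>v\<in>A. \<phi> v * measure M {\<omega>\<in>space M. f \<omega> = v})"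
proof -
  interpret finite_measure M by fact
  have sets: "{\<omega>\<in>space M. f \<omega> = v} \<in> sets M" for v
  proof -
    have "f -` {v} \<inter> space M \<in> sets M" by (rule measurable_sets[OF fm]) auto
    moreover have "f -` {v} \<inter> space M = {\<omega>\<in>space M. f \<omega> = v}" by auto
    ultimately show ?thesis by simp
  qed
  have pt: "\<phi> (f \<omega>) = (\<Sum>v\<in>A. \<phi> v * indicator {\<omega>\<in>space M. f \<omega> = v} \<omega>)" if w: "\<omega> \<in> space M" for \<omega>
  proof -
    have "(\<Sum>v\<in>A. \<phi> v * indicator {\<omega>\<in>space M. f \<omega> = v} \<omega>) = (\<Sum>v\<in>A. if v = f \<omega> then \<phi> v else 0)"
      by (rule sum.cong) (auto simp: indicator_def w)
    also have "\<dots> = \<phi> (f \<omega>)" using inA[OF w] fin by (simp add: sum.delta')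
    finally show "\<phi> (f \<omega>) = (\<Sum>v\<in>A. \<phi> v * indicator {\<omega>\<in>space M. f \<omega> = v} \<omega>)" by simp
  qed
  have "(\<integral>\<omega>. \<phi> (f \<omega>) \<partial>M) = (\<integral>\<omega>. (\<Sum>v\<in>A. \<phi> v * indicator {\<omega>\<in>space M. f \<omega> = v} \<omega>) \<partial>M)"
    by (rule Bochner_Integration.integral_cong[OF refl pt])
  also have "\<dots> = (\<Sum>v\<in>A. \<integral>\<omega>. \<phi> v * indicator {\<omega>\<in>space M. f \<omega> = v} \<omega> \<partial>M)"
    by (intro Bochner_Integration.integral_sum integrable_mult_right integrable_real_indicator sets) (simp add: less_top[symmetric])
  also have "\<dots> = (\<Sum>v\<in>A. \<phi> v * measure M {\<omega>\<in>space M. f \<omega> = v})"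
    by (rule sum.cong[OF refl]) (simp add: sets)
  finally show ?thesis .
qed

lemma fun_of:
  assumes "\<And>\<omega> \<omega>'. f \<omega> = f \<omega>' \<Longrightarrow> G \<omega> = G \<omega>'"
  shows "G = (\<lambda>\<omega>. (\<lambda>v. G (SOME \<omega>. f \<omega> = v)) (f \<omega>))"
proof
  fix \<omega>
  have "f (SOME \<omega>'. f \<omega>' = f \<omega>) = f \<omega>" by (rule someI[of _ \<omega>]) simp
  then show "G \<omega> = (\<lambda>v. G (SOME \<omega>. f \<omega> = v)) (f \<omega>)" using assms by metis
qed

lemma integrable_fin:
  fixes f :: "'w \<Rightarrow> 'v" and \<phi> :: "'v \<Rightarrow> real"
  assumes fm: "f \<in> M \<rightarrow>\<^sub>M count_space UNIV" and fin: "finite A"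
    and inA: "\<And>\<omega>. \<omega> \<in> space M \<Longrightarrow> f \<omega> \<in> A" and fm2: "finite_measure M"
  shows "integrable M (\<lambda>\<omega>. \<phi> (f \<omega>))"
proof -
  interpret finite_measure M by fact
  show ?thesis
  proof (rule integrable_const_bound[where B="\<Sum>v\<in>A. \<bar>\<phi> v\<bar>"])
    show "AE x in M. norm (\<phi> (f x)) \<le> (\<Sum>v\<in>A. \<bar>\<phi> v\<bar>)"
    proof (rule AE_I2)
      fix x assume "x \<in> space M"
      then have "f x \<in> A" by (rule inA)
      then show "norm (\<phi> (f x)) \<le> (\<Sum>v\<in>A. \<bar>\<phi> v\<bar>)"
        using fin by (auto intro: member_le_sum)
    qed
    show "(\<lambda>\<omega>. \<phi> (f \<omega>)) \<in> borel_measurable M"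
      by (rule measurable_compose[OF fm]) simp
  qed
qed

lemma hist_Suc: "1 \<le> n \<Longrightarrow> hist X Y Z (Suc n) \<omega> = hist X Y Z n \<omega> @ [(X n \<omega>, Y n \<omega>, Z n \<omega>)]"
  by (simp add: hist_def)

lemma hist_len: "length (hist X Y Z n \<omega>) = n - 1"
  by (simp add: hist_def)

lemma hist_eq: "hist X Y Z (Suc T) \<omega> = hist X Y Z (Suc T) \<omega>' \<Longrightarrow> i \<in> {1..T} \<Longrightarrow>
   X i \<omega> = X i \<omega>' \<and> Y i \<omega> = Y i \<omega>' \<and> Z i \<omega> = Z i \<omega>'"
proof -
  assume h: "hist X Y Z (Suc T) \<omega> = hist X Y Z (Suc T) \<omega>'" and i: "i \<in> {1..T}"
  have "\<forall>x\<in>{1..<Suc T}. (X x \<omega>, Y x \<omega>, Z x \<omega>) = (X x \<omega>', Y x \<omega>', Z x \<omega>')"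
    using h by (simp only: hist_def map_eq_conv set_upt)
  then show ?thesis using i by auto
qed

lemma hist_eq2: "(\<forall>i\<in>{1..T}. X i \<omega> = X i \<omega>' \<and> Y i \<omega> = Y i \<omega>' \<and> Z i \<omega> = Z i \<omega>') \<Longrightarrow>
   hist X Y Z (Suc T) \<omega> = hist X Y Z (Suc T) \<omega>'"
  unfolding hist_def map_eq_conv set_upt by auto

lemma finite_hist_range: "finite {l :: ('x::finite \<times> 'y::finite \<times> 'z::finite) list. length l = k}"
  using finite_lists_length_eq[of "UNIV :: ('x \<times> 'y \<times> 'z) set" k] by simp




lemma bern_pos:
  fixes h p :: real assumes h: "h \<ge> 0" and p: "0 \<le> p" "p \<le> 1"
  shows "p * exp (h * (1 - p)) + (1 - p) * exp (- h * p) \<le> exp (h\<^sup>2 / 8)"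
proof -
  have pos: "1 + p * (exp h - 1) > 0" using p h by (smt (verit) exp_ge_zero mult_nonneg_nonneg one_le_exp_iff)
  have "-h * p + ln (1 + p * (exp h - 1)) \<le> h\<^sup>2 / 8"
    using Hoeffdings_lemma_aux[OF h p(1)] by simp
  then have "ln (1 + p * (exp h - 1)) \<le> h * p + h\<^sup>2 / 8" by simp
  then have "1 + p * (exp h - 1) \<le> exp (h * p + h\<^sup>2 / 8)"
    using pos by (metis exp_le_cancel_iff exp_ln)
  then have "exp (- h * p) * (1 + p * (exp h - 1)) \<le> exp (- h * p) * exp (h * p + h\<^sup>2 / 8)"
    by (rule mult_left_mono) simp
  also have "\<dots> = exp (h\<^sup>2 / 8)" by (simp add: exp_add[symmetric])
  also have "exp (- h * p) * (1 + p * (exp h - 1)) = p * exp (h * (1 - p)) + (1 - p) * exp (- h * p)"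
    by (simp add: algebra_simps exp_add[symmetric] exp_diff)
  finally show ?thesis .
qed

lemma bern:
  fixes h p :: real assumes p: "0 \<le> p" "p \<le> 1"
  shows "p * exp (h * (1 - p)) + (1 - p) * exp (- h * p) \<le> exp (h\<^sup>2 / 8)"
proof (cases "h \<ge> 0")
  case True then show ?thesis using bern_pos p by blast
next
  case False
  have "(1 - p) * exp ((-h) * (1 - (1 - p))) + (1 - (1 - p)) * exp (- (-h) * (1 - p)) \<le> exp ((-h)\<^sup>2 / 8)"
    by (rule bern_pos) (use False p in auto)
  then show ?thesis by (simp add: algebra_simps)
qed




lemma integral_finP:
  fixes f :: "'w \<Rightarrow> 'v" and \<phi> :: "'v \<Rightarrow> real"
  assumes fm: "f \<in> M \<rightarrow>\<^sub>M count_space UNIV" and fin: "finite A"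
    and inA: "\<And>\<omega>. \<omega> \<in> space M \<Longrightarrow> f \<omega> \<in> A" and fm2: "finite_measure M"
    and Pm: "{\<omega>\<in>space M. P \<omega>} \<in> sets M"
  shows "(\<integral>\<omega>. \<phi> (f \<omega>) * of_bool (P \<omega>) \<partial>M) = (\<Sum>v\<in>A. \<phi> v * measure M {\<omega>\<in>space M. f \<omega> = v \<and> P \<omega>})"
proof -
  interpret finite_measure M by fact
  have sets: "{\<omega>\<in>space M. f \<omega> = v \<and> P \<omega>} \<in> sets M" for v
  proof -
    have "f -` {v} \<inter> space M \<in> sets M" by (rule measurable_sets[OF fm]) auto
    moreover have "f -` {v} \<inter> space M \<inter> {\<omega>\<in>space M. P \<omega>} = {\<omega>\<in>space M. f \<omega> = v \<and> P \<omega>}" by auto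
    ultimately show ?thesis using Pm by (metis sets.Int)
  qed
  have pt: "\<phi> (f \<omega>) * of_bool (P \<omega>) = (\<Sum>v\<in>A. \<phi> v * indicator {\<omega>\<in>space M. f \<omega> = v \<and> P \<omega>} \<omega>)" if w: "\<omega> \<in> space M" for \<omega>
  proof -
    have "(\<Sum>v\<in>A. \<phi> v * indicator {\<omega>\<in>space M. f \<omega> = v \<and> P \<omega>} \<omega>) = (\<Sum>v\<in>A. if v = f \<omega> then \<phi> v * of_bool (P \<omega>) else 0)"
      by (rule sum.cong) (auto simp: indicator_def w)
    also have "\<dots> = \<phi> (f \<omega>) * of_bool (P \<omega>)" using inA[OF w] fin by (simp add: sum.delta')
    finally show ?thesis by simp
  qed
  have "(\<integral>\<omega>. \<phi> (f \<omega>) * of_bool (P \<omega>) \<partial>M) = (\<integral>\<omega>. (\<Sum>v\<in>A. \<phi> v * indicator {\<omega>\<in>space M. f \<omega> = v \<and> P \<omega>} \<omega>) \<partial>M)"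
    by (rule Bochner_Integration.integral_cong[OF refl pt])
  also have "\<dots> = (\<Sum>v\<in>A. \<integral>\<omega>. \<phi> v * indicator {\<omega>\<in>space M. f \<omega> = v \<and> P \<omega>} \<omega> \<partial>M)"
    by (intro Bochner_Integration.integral_sum integrable_mult_right integrable_real_indicator sets) (simp add: less_top[symmetric])
  also have "\<dots> = (\<Sum>v\<in>A. \<phi> v * measure M {\<omega>\<in>space M. f \<omega> = v \<and> P \<omega>})"
    by (rule sum.cong[OF refl]) (simp add: sets)
  finally show ?thesis .
qed

locale setting =
  fixes M :: "'w measure"
    and X :: "nat \<Rightarrow> 'w \<Rightarrow> 'x::finite"
    and Y :: "nat \<Rightarrow> 'w \<Rightarrow> 'y::finite"
    and Z :: "nat \<Rightarrow> 'w \<Rightarrow> 'z::finite"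
    and \<pi> :: "'z pmf"
    and q :: "'x \<Rightarrow> 'z \<Rightarrow> 'y pmf"
  assumes PS: "prob_space M"
    and X_meas: "\<And>n. X n \<in> measurable M (count_space UNIV)"
    and Y_meas: "\<And>n. Y n \<in> measurable M (count_space UNIV)"
    and Z_meas: "\<And>n. Z n \<in> measurable M (count_space UNIV)"
    and Z_cond: "\<And>n B z. n \<ge> 1 \<Longrightarrow>
        measure M {\<omega> \<in> space M. hist X Y Z n \<omega> \<in> B \<and> Z n \<omega> = z}
        = pmf \<pi> z * measure M {\<omega> \<in> space M. hist X Y Z n \<omega> \<in> B}"
    and Y_cond: "\<And>n B y'. n \<ge> 1 \<Longrightarrow>
        measure M {\<omega> \<in> space M. (hist X Y Z n \<omega>, Z n \<omega>, X n \<omega>) \<in> B \<and> Y n \<omega> = y'}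
        = (\<integral>\<omega>. indicator {\<omega> \<in> space M. (hist X Y Z n \<omega>, Z n \<omega>, X n \<omega>) \<in> B} \<omega>
                 * pmf (q (X n \<omega>) (Z n \<omega>)) y' \<partial>M)"
begin

sublocale prob_space M by (rule PS)

definition Wf :: "nat \<Rightarrow> 'w \<Rightarrow> ('x \<times> 'y \<times> 'z) list \<times> 'z \<times> 'x" where
  "Wf n \<omega> = (hist X Y Z n \<omega>, Z n \<omega>, X n \<omega>)"

definition Rs :: "nat \<Rightarrow> (('x \<times> 'y \<times> 'z) list \<times> 'z \<times> 'x) set" where
  "Rs n = {l. length l = n - 1} \<times> UNIV \<times> UNIV"

lemma Rs_fin: "finite (Rs n)"
  unfolding Rs_def using finite_hist_range[where 'x='x and 'y='y and 'z='z] by simp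

lemma Wf_in: "Wf n \<omega> \<in> Rs n"
  by (simp add: Wf_def Rs_def hist_len)

lemma cs: "(f :: 'w \<Rightarrow> 'b) \<in> M \<rightarrow>\<^sub>M count_space UNIV \<Longrightarrow> (\<lambda>\<omega>. g (f \<omega>)) \<in> M \<rightarrow>\<^sub>M count_space UNIV"
  by (rule measurable_compose[where N="count_space UNIV"]) simp_all

lemma XYZ_meas: "(\<lambda>\<omega>. (X n \<omega>, Y n \<omega>, Z n \<omega>)) \<in> M \<rightarrow>\<^sub>M count_space UNIV"
proof (rule measurable_compose_countable[where f="\<lambda>a \<omega>. (a, Y n \<omega>, Z n \<omega>)" and g="X n", OF _ X_meas])
  fix a show "(\<lambda>\<omega>. (a, Y n \<omega>, Z n \<omega>)) \<in> M \<rightarrow>\<^sub>M count_space UNIV"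
  proof (rule measurable_compose_countable[where f="\<lambda>b \<omega>. (a, b, Z n \<omega>)" and g="Y n", OF _ Y_meas])
    fix b show "(\<lambda>\<omega>. (a, b, Z n \<omega>)) \<in> M \<rightarrow>\<^sub>M count_space UNIV"
      by (rule cs[OF Z_meas])
  qed
qed

lemma hist_meas: "hist X Y Z n \<in> M \<rightarrow>\<^sub>M count_space UNIV"
proof (induction n)
  case 0 then show ?case by (simp add: hist_def)
next
  case (Suc n)
  show ?case
  proof (cases "n = 0")
    case True then show ?thesis by (simp add: hist_def)
  next
    case False
    then have eq: "hist X Y Z (Suc n) = (\<lambda>\<omega>. hist X Y Z n \<omega> @ [(X n \<omega>, Y n \<omega>, Z n \<omega>)])"
      by (intro ext hist_Suc) simp
    show ?thesis unfolding eq
    proof (rule measurable_compose_countable[where f="\<lambda>l \<omega>. l @ [(X n \<omega>, Y n \<omega>, Z n \<omega>)]" and g="hist X Y Z n", OF _ Suc.IH])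
      fix l show "(\<lambda>\<omega>. l @ [(X n \<omega>, Y n \<omega>, Z n \<omega>)]) \<in> M \<rightarrow>\<^sub>M count_space UNIV"
        by (rule cs[OF XYZ_meas])
    qed
  qed
qed

lemma Wf_meas: "Wf n \<in> M \<rightarrow>\<^sub>M count_space UNIV"
  unfolding Wf_def
proof (rule measurable_compose_countable[where f="\<lambda>l \<omega>. (l, Z n \<omega>, X n \<omega>)" and g="hist X Y Z n", OF _ hist_meas])
  fix l show "(\<lambda>\<omega>. (l, Z n \<omega>, X n \<omega>)) \<in> M \<rightarrow>\<^sub>M count_space UNIV"
  proof (rule measurable_compose_countable[where f="\<lambda>b \<omega>. (l, b, X n \<omega>)" and g="Z n", OF _ Z_meas])
    fix b show "(\<lambda>\<omega>. (l, b, X n \<omega>)) \<in> M \<rightarrow>\<^sub>M count_space UNIV"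
      by (rule cs[OF X_meas])
  qed
qed

lemma pred_cs: "f \<in> M \<rightarrow>\<^sub>M count_space UNIV \<Longrightarrow> {\<omega>\<in>space M. P (f \<omega>)} \<in> sets M"
proof -
  assume f: "f \<in> M \<rightarrow>\<^sub>M count_space UNIV"
  have "f -` {v. P v} \<inter> space M \<in> sets M" by (rule measurable_sets[OF f]) auto
  moreover have "f -` {v. P v} \<inter> space M = {\<omega>\<in>space M. P (f \<omega>)}" by auto
  ultimately show ?thesis by simp
qed

lemma keyZ:
  assumes n: "1 \<le> n" and G: "\<And>\<omega> \<omega>'. hist X Y Z n \<omega> = hist X Y Z n \<omega>' \<Longrightarrow> G \<omega> = G \<omega>'"
  shows "(\<integral>\<omega>. G \<omega> * of_bool (Z n \<omega> = z) \<partial>M) = pmf \<pi> z * (\<integral>\<omega>. G \<omega> \<partial>M)"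
proof -
  define g where "g = (\<lambda>v. G (SOME \<omega>. hist X Y Z n \<omega> = v))"
  have Gg: "G = (\<lambda>\<omega>. g (hist X Y Z n \<omega>))" unfolding g_def by (rule fun_of) (rule G)
  let ?L = "{l :: ('x \<times> 'y \<times> 'z) list. length l = n - 1}"
  have fin: "finite ?L" by (rule finite_hist_range)
  have "(\<integral>\<omega>. G \<omega> * of_bool (Z n \<omega> = z) \<partial>M) = (\<Sum>v\<in>?L. g v * measure M {\<omega>\<in>space M. hist X Y Z n \<omega> = v \<and> Z n \<omega> = z})"
    unfolding Gg
    by (rule integral_finP[OF hist_meas fin]) (auto simp: hist_len finite_measure_axioms intro: pred_cs[OF Z_meas])
  also have "\<dots> = (\<Sum>v\<in>?L. g v * (pmf \<pi> z * measure M {\<omega>\<in>space M. hist X Y Z n \<omega> = v \<and> True}))"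
    using Z_cond[OF n, of "{_}"] by simp
  also have "\<dots> = pmf \<pi> z * (\<Sum>v\<in>?L. g v * measure M {\<omega>\<in>space M. hist X Y Z n \<omega> = v \<and> True})"
    by (simp add: sum_distrib_left algebra_simps)
  also have "(\<Sum>v\<in>?L. g v * measure M {\<omega>\<in>space M. hist X Y Z n \<omega> = v \<and> True}) = (\<integral>\<omega>. g (hist X Y Z n \<omega>) * of_bool True \<partial>M)"
    by (rule integral_finP[OF hist_meas fin, symmetric]) (auto simp: hist_len finite_measure_axioms)
  finally show ?thesis by (simp add: Gg)
qed

lemma keyY:
  assumes n: "1 \<le> n" and G: "\<And>\<omega> \<omega>'. Wf n \<omega> = Wf n \<omega>' \<Longrightarrow> G \<omega> = G \<omega>'"
  shows "(\<integral>\<omega>. G \<omega> * of_bool (Y n \<omega> = y') \<partial>M) = (\<integral>\<omega>. G \<omega> * pmf (q (X n \<omega>) (Z n \<omega>)) y' \<partial>M)"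
proof -
  define g where "g = (\<lambda>v. G (SOME \<omega>. Wf n \<omega> = v))"
  have Gg: "G = (\<lambda>\<omega>. g (Wf n \<omega>))" unfolding g_def by (rule fun_of) (rule G)
  define \<rho> where "\<rho> = (\<lambda>(v :: ('x \<times> 'y \<times> 'z) list \<times> 'z \<times> 'x). pmf (q (snd (snd v)) (fst (snd v))) y')"
  have r: "pmf (q (X n \<omega>) (Z n \<omega>)) y' = \<rho> (Wf n \<omega>)" for \<omega> by (simp add: \<rho>_def Wf_def)
  have m1: "measure M {\<omega>\<in>space M. Wf n \<omega> = w \<and> Y n \<omega> = y'} = \<rho> w * measure M {\<omega>\<in>space M. Wf n \<omega> = w \<and> True}"
    if w: "w \<in> Rs n" for w
  proof -
    have "measure M {\<omega>\<in>space M. Wf n \<omega> = w \<and> Y n \<omega> = y'}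
        = (\<integral>\<omega>. indicator {\<omega> \<in> space M. (hist X Y Z n \<omega>, Z n \<omega>, X n \<omega>) \<in> {w}} \<omega>
                 * pmf (q (X n \<omega>) (Z n \<omega>)) y' \<partial>M)"
      using Y_cond[OF n, of "{w}" y'] by (simp add: Wf_def)
    also have "\<dots> = (\<integral>\<omega>. (\<lambda>v. of_bool (v = w) * \<rho> v) (Wf n \<omega>) * of_bool True \<partial>M)"
      by (rule Bochner_Integration.integral_cong) (auto simp: r Wf_def indicator_def)
    also have "\<dots> = (\<Sum>v\<in>Rs n. (of_bool (v = w) * \<rho> v) * measure M {\<omega>\<in>space M. Wf n \<omega> = v \<and> True})"
      by (rule integral_finP[OF Wf_meas Rs_fin]) (auto simp: Wf_in finite_measure_axioms)
    also have "\<dots> = \<rho> w * measure M {\<omega>\<in>space M. Wf n \<omega> = w \<and> True}"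
    proof -
      have "(\<Sum>v\<in>Rs n. (of_bool (v = w) * \<rho> v) * measure M {\<omega>\<in>space M. Wf n \<omega> = v \<and> True})
          = (\<Sum>v\<in>Rs n. if v = w then \<rho> v * measure M {\<omega>\<in>space M. Wf n \<omega> = v \<and> True} else 0)"
        by (rule sum.cong) auto
      also have "\<dots> = \<rho> w * measure M {\<omega>\<in>space M. Wf n \<omega> = w \<and> True}"
        using w Rs_fin by (simp add: sum.delta')
      finally show ?thesis .
    qed
    finally show ?thesis .
  qed
  have "(\<integral>\<omega>. G \<omega> * of_bool (Y n \<omega> = y') \<partial>M) = (\<Sum>w\<in>Rs n. g w * measure M {\<omega>\<in>space M. Wf n \<omega> = w \<and> Y n \<omega> = y'})"
    unfolding Gg
    by (rule integral_finP[OF Wf_meas Rs_fin]) (auto simp: Wf_in finite_measure_axioms intro: pred_cs[OF Y_meas])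
  also have "\<dots> = (\<Sum>w\<in>Rs n. (g w * \<rho> w) * measure M {\<omega>\<in>space M. Wf n \<omega> = w \<and> True})"
    by (rule sum.cong[OF refl]) (simp add: m1)
  also have "\<dots> = (\<integral>\<omega>. (\<lambda>v. g v * \<rho> v) (Wf n \<omega>) * of_bool True \<partial>M)"
    by (rule integral_finP[OF Wf_meas Rs_fin, symmetric]) (auto simp: Wf_in finite_measure_axioms)
  also have "\<dots> = (\<integral>\<omega>. G \<omega> * pmf (q (X n \<omega>) (Z n \<omega>)) y' \<partial>M)"
    by (simp add: Gg r)
  finally show ?thesis .
qed

end



context setting begin

definition dep :: "nat \<Rightarrow> ('w \<Rightarrow> 'b) \<Rightarrow> bool" where
  "dep T G \<longleftrightarrow> (\<forall>\<omega> \<omega>'. (\<forall>i\<in>{1..T}. X i \<omega> = X i \<omega>' \<and> Y i \<omega> = Y i \<omega>' \<and> Z i \<omega> = Z i \<omega>') \<longrightarrow> G \<omega> = G \<omega>')"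

lemma dep_mono: "dep T G \<Longrightarrow> T \<le> T' \<Longrightarrow> dep T' G"
  unfolding dep_def by (meson atLeastAtMost_iff le_trans)

lemma dep_hist: "dep T G \<Longrightarrow> hist X Y Z (Suc T) \<omega> = hist X Y Z (Suc T) \<omega>' \<Longrightarrow> G \<omega> = G \<omega>'"
proof -
  assume d: "dep T G" and h: "hist X Y Z (Suc T) \<omega> = hist X Y Z (Suc T) \<omega>'"
  have "\<forall>i\<in>{1..T}. X i \<omega> = X i \<omega>' \<and> Y i \<omega> = Y i \<omega>' \<and> Z i \<omega> = Z i \<omega>'"
    using hist_eq[OF h] by blast
  then show ?thesis using d unfolding dep_def by blast
qed

lemma dep_Wf: "dep T G \<Longrightarrow> Wf (Suc T) \<omega> = Wf (Suc T) \<omega>' \<Longrightarrow> G \<omega> = G \<omega>'"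
  unfolding Wf_def using dep_hist[of T G \<omega> \<omega>'] by simp

lemma dep_comp: "dep T f \<Longrightarrow> dep T (\<lambda>\<omega>. h (f \<omega>))"
  unfolding dep_def by metis

lemma dep_comp2: "dep T f \<Longrightarrow> dep T g \<Longrightarrow> dep T (\<lambda>\<omega>. h (f \<omega>) (g \<omega>))"
  unfolding dep_def by metis

lemma dep_int:
  fixes G :: "'w \<Rightarrow> real"
  assumes "dep T G" shows "integrable M G"
proof -
  define g where "g = (\<lambda>v. G (SOME \<omega>. hist X Y Z (Suc T) \<omega> = v))"
  have Gg: "G = (\<lambda>\<omega>. g (hist X Y Z (Suc T) \<omega>))" unfolding g_def
    by (rule fun_of) (rule dep_hist[OF assms])
  show ?thesis unfolding Gg
    by (rule integrable_fin[OF hist_meas finite_hist_range]) (auto simp: hist_len finite_measure_axioms)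
qed

lemma dep_sets:
  fixes P :: "'w \<Rightarrow> bool"
  assumes "dep T P" shows "{\<omega>\<in>space M. P \<omega>} \<in> sets M"
proof -
  define g where "g = (\<lambda>v. P (SOME \<omega>. hist X Y Z (Suc T) \<omega> = v))"
  have Gg: "P = (\<lambda>\<omega>. g (hist X Y Z (Suc T) \<omega>))" unfolding g_def
    by (rule fun_of) (rule dep_hist[OF assms])
  show ?thesis unfolding Gg by (rule pred_cs[OF hist_meas])
qed

lemma supermart:
  fixes a V :: "nat \<Rightarrow> 'w \<Rightarrow> bool" and p l :: real
  assumes p: "0 \<le> p" "p \<le> 1"
    and depa: "\<And>i. 1 \<le> i \<Longrightarrow> dep i (a i)" and depV: "\<And>i. 1 \<le> i \<Longrightarrow> dep i (V i)"
    and step: "\<And>T (G :: 'w \<Rightarrow> real). dep T G \<Longrightarrow>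
        (\<integral>\<omega>. G \<omega> * of_bool (a (Suc T) \<omega>) * of_bool (V (Suc T) \<omega>) \<partial>M) = p * (\<integral>\<omega>. G \<omega> * of_bool (a (Suc T) \<omega>) \<partial>M)"
  shows "(\<integral>\<omega>. exp (\<Sum>i\<in>{1..T}. if a i \<omega> then l * (of_bool (V i \<omega>) - p) - l\<^sup>2/8 else 0) \<partial>M) \<le> 1"
proof -
  define d where "d i \<omega> = (if a i \<omega> then l * (of_bool (V i \<omega>) - p) - l\<^sup>2/8 else 0)" for i \<omega>
  define F where "F T \<omega> = exp (\<Sum>i\<in>{1..T}. d i \<omega>)" for T \<omega>
  have depF: "dep T (F T)" for T
    unfolding dep_def
  proof (intro allI impI)
    fix \<omega> \<omega>' assume ag: "\<forall>i\<in>{1..T}. X i \<omega> = X i \<omega>' \<and> Y i \<omega> = Y i \<omega>' \<and> Z i \<omega> = Z i \<omega>'"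
    have "d i \<omega> = d i \<omega>'" if i: "i \<in> {1..T}" for i
    proof -
      have "dep T (a i)" using dep_mono[OF depa] i by simp
      moreover have "dep T (V i)" using dep_mono[OF depV] i by simp
      ultimately
      have "a i \<omega> = a i \<omega>'" "V i \<omega> = V i \<omega>'" using ag unfolding dep_def by blast+
      then show ?thesis by (simp add: d_def)
    qed
    then show "F T \<omega> = F T \<omega>'" unfolding F_def by (metis (mono_tags, lifting) sum.cong)
  qed
  have "(\<integral>\<omega>. F T \<omega> \<partial>M) \<le> 1"
  proof (induction T)
    case 0 then show ?case by (simp add: F_def)
  next
    case (Suc T)
    define A where "A \<omega> = (of_bool (a (Suc T) \<omega>) :: real)" for \<omega>
    define B where "B \<omega> = (of_bool (V (Suc T) \<omega>) :: real)" for \<omega>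
    define c1 where "c1 = exp (l * (1 - p) - l\<^sup>2/8)"
    define c0 where "c0 = exp (l * (0 - p) - l\<^sup>2/8)"
    have dA: "dep (Suc T) A" unfolding A_def by (rule dep_comp) (rule depa, simp)
    have dB: "dep (Suc T) B" unfolding B_def by (rule dep_comp) (rule depV, simp)
    have dF: "dep (Suc T) (F T)" by (rule dep_mono[OF depF]) simp
    have dFA: "dep (Suc T) (\<lambda>\<omega>. F T \<omega> * A \<omega>)" by (rule dep_comp2[OF dF dA])
    have dFAB: "dep (Suc T) (\<lambda>\<omega>. F T \<omega> * A \<omega> * B \<omega>)" by (rule dep_comp2[OF dFA dB])
    have pt: "F (Suc T) \<omega> = F T \<omega> - F T \<omega> * A \<omega> + c0 * (F T \<omega> * A \<omega>) + (c1 - c0) * (F T \<omega> * A \<omega> * B \<omega>)" for \<omega>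
    proof -
      have "F (Suc T) \<omega> = F T \<omega> * exp (d (Suc T) \<omega>)"
        by (simp add: F_def atLeastAtMostSuc_conv exp_add)
      then show ?thesis
        by (cases "a (Suc T) \<omega>"; cases "V (Suc T) \<omega>") (simp_all add: A_def B_def c0_def c1_def d_def algebra_simps)
    qed
    have iF: "integrable M (F T)" by (rule dep_int[OF depF])
    have iFA: "integrable M (\<lambda>\<omega>. F T \<omega> * A \<omega>)" by (rule dep_int[OF dFA])
    have iFAB: "integrable M (\<lambda>\<omega>. F T \<omega> * A \<omega> * B \<omega>)" by (rule dep_int[OF dFAB])
    have st: "(\<integral>\<omega>. F T \<omega> * A \<omega> * B \<omega> \<partial>M) = p * (\<integral>\<omega>. F T \<omega> * A \<omega> \<partial>M)"
      unfolding A_def B_def by (rule step[OF depF])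
    have "(\<integral>\<omega>. F (Suc T) \<omega> \<partial>M) = (\<integral>\<omega>. F T \<omega> - F T \<omega> * A \<omega> + c0 * (F T \<omega> * A \<omega>) + (c1 - c0) * (F T \<omega> * A \<omega> * B \<omega>) \<partial>M)"
      by (simp add: pt)
    also have "\<dots> = (\<integral>\<omega>. F T \<omega> \<partial>M) - (\<integral>\<omega>. F T \<omega> * A \<omega> \<partial>M) + c0 * (\<integral>\<omega>. F T \<omega> * A \<omega> \<partial>M) + (c1 - c0) * (\<integral>\<omega>. F T \<omega> * A \<omega> * B \<omega> \<partial>M)"
      using iF iFA iFAB by simp
    also have "\<dots> = (\<integral>\<omega>. F T \<omega> \<partial>M) - (1 - (p * c1 + (1 - p) * c0)) * (\<integral>\<omega>. F T \<omega> * A \<omega> \<partial>M)"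
      unfolding st by (simp add: algebra_simps)
    also have "\<dots> \<le> (\<integral>\<omega>. F T \<omega> \<partial>M)"
    proof -
      have "p * c1 + (1 - p) * c0 = exp (- l\<^sup>2/8) * (p * exp (l * (1 - p)) + (1 - p) * exp (- l * p))"
      proof -
        have "c1 = exp (- l\<^sup>2/8) * exp (l * (1 - p))" unfolding c1_def by (simp add: exp_add[symmetric])
        moreover have "c0 = exp (- l\<^sup>2/8) * exp (- l * p)" unfolding c0_def by (simp add: exp_add[symmetric])
        ultimately show ?thesis by (simp add: algebra_simps)
      qed
      also have "\<dots> \<le> exp (- l\<^sup>2/8) * exp (l\<^sup>2/8)"
        by (rule mult_left_mono[OF bern[OF p]]) simp
      also have "\<dots> = 1" by (simp add: exp_add[symmetric])
      finally have "p * c1 + (1 - p) * c0 \<le> 1" .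
      moreover have "0 \<le> (\<integral>\<omega>. F T \<omega> * A \<omega> \<partial>M)"
        by (rule integral_nonneg_AE) (simp add: F_def A_def)
      ultimately show ?thesis by (simp add: mult_nonneg_nonneg)
    qed
    finally show ?case using Suc.IH by linarith
  qed
  then show ?thesis by (simp add: F_def d_def)
qed

lemma markov_exp:
  fixes F :: "'w \<Rightarrow> real"
  assumes U: "U \<in> sets M" and iF: "integrable M F" and nn: "\<And>\<omega>. \<omega> \<in> space M \<Longrightarrow> 0 \<le> F \<omega>"
    and lb: "\<And>\<omega>. \<omega> \<in> U \<Longrightarrow> c \<le> F \<omega>"
  shows "measure M U * c \<le> (\<integral>\<omega>. F \<omega> \<partial>M)"
proof -
  have "measure M U * c = (\<integral>\<omega>. indicator U \<omega> * c \<partial>M)" using U by simp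
  also have "\<dots> \<le> (\<integral>\<omega>. F \<omega> \<partial>M)"
  proof (rule integral_mono)
    show "integrable M (\<lambda>\<omega>. indicator U \<omega> * c)" using U by (simp add: less_top[symmetric])
    show "integrable M F" by fact
    fix \<omega> assume "\<omega> \<in> space M"
    then show "indicator U \<omega> * c \<le> F \<omega>" using lb nn by (auto simp: indicator_def)
  qed
  finally show ?thesis .
qed

lemma dep_sum: assumes d: "\<And>i. i \<in> I \<Longrightarrow> dep T (f i)" shows "dep T (\<lambda>\<omega>. \<Sum>i\<in>I. f i \<omega>)"
proof (unfold dep_def, intro allI impI)
  fix \<omega> \<omega>' assume ag: "\<forall>i\<in>{1..T}. X i \<omega> = X i \<omega>' \<and> Y i \<omega> = Y i \<omega>' \<and> Z i \<omega> = Z i \<omega>'"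
  have "f i \<omega> = f i \<omega>'" if "i \<in> I" for i using d[OF that] ag unfolding dep_def by blast
  then show "(\<Sum>i\<in>I. f i \<omega>) = (\<Sum>i\<in>I. f i \<omega>')" by (rule sum.cong[OF refl])
qed

lemma chernoff:
  fixes a V :: "nat \<Rightarrow> 'w \<Rightarrow> bool" and p \<epsilon> :: real and m T :: nat
  assumes p: "0 \<le> p" "p \<le> 1"
    and depa: "\<And>i. 1 \<le> i \<Longrightarrow> dep i (a i)" and depV: "\<And>i. 1 \<le> i \<Longrightarrow> dep i (V i)"
    and step: "\<And>T (G :: 'w \<Rightarrow> real). dep T G \<Longrightarrow>
        (\<integral>\<omega>. G \<omega> * of_bool (a (Suc T) \<omega>) * of_bool (V (Suc T) \<omega>) \<partial>M) = p * (\<integral>\<omega>. G \<omega> * of_bool (a (Suc T) \<omega>) \<partial>M)"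
    and eps: "0 \<le> \<epsilon>"
  shows "measure M {\<omega>\<in>space M. (\<Sum>i\<in>{1..T}. of_bool (a i \<omega>)) = real m \<and>
            \<epsilon> * m < \<bar>\<Sum>i\<in>{1..T}. of_bool (a i \<omega>) * (of_bool (V i \<omega>) - p)\<bar>}
         \<le> 2 * exp (-2 * \<epsilon>\<^sup>2 * m)"
proof -
  define K where "K \<omega> = (\<Sum>i\<in>{1..T}. of_bool (a i \<omega>) :: real)" for \<omega>
  define S where "S \<omega> = (\<Sum>i\<in>{1..T}. of_bool (a i \<omega>) * (of_bool (V i \<omega>) - p))" for \<omega>
  have dai: "dep T (a i)" if "i \<in> {1..T}" for i using dep_mono[OF depa] that by simp
  have dVi: "dep T (V i)" if "i \<in> {1..T}" for i using dep_mono[OF depV] that by simp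
  have dK: "dep T K" unfolding K_def by (rule dep_sum) (rule dep_comp[OF dai])
  have dS: "dep T S" unfolding S_def by (rule dep_sum) (rule dep_comp2[OF dai dVi])
  have ident: "(\<Sum>i\<in>{1..T}. if a i \<omega> then l * (of_bool (V i \<omega>) - p) - l\<^sup>2/8 else 0) = l * S \<omega> - l\<^sup>2/8 * K \<omega>" for l \<omega>
  proof -
    have "(\<Sum>i\<in>{1..T}. if a i \<omega> then l * (of_bool (V i \<omega>) - p) - l\<^sup>2/8 else 0)
        = (\<Sum>i\<in>{1..T}. l * (of_bool (a i \<omega>) * (of_bool (V i \<omega>) - p)) - l\<^sup>2/8 * of_bool (a i \<omega>))"
      by (rule sum.cong) auto
    also have "\<dots> = l * S \<omega> - l\<^sup>2/8 * K \<omega>"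
      unfolding S_def K_def sum_subtractf sum_distrib_left ..
    finally show ?thesis .
  qed
  have bound: "measure M {\<omega>\<in>space M. K \<omega> = real m \<and> \<epsilon> * (\<epsilon> * m) \<le> l * S \<omega> / 4} \<le> exp (-2 * \<epsilon>\<^sup>2 * m)"
    if l: "l\<^sup>2 = 16 * \<epsilon>\<^sup>2" for l
  proof -
    define U where "U = {\<omega>\<in>space M. K \<omega> = real m \<and> \<epsilon> * (\<epsilon> * m) \<le> l * S \<omega> / 4}"
    have Us: "U \<in> sets M" unfolding U_def by (rule dep_sets) (rule dep_comp2[OF dK dS])
    define F where "F \<omega> = exp (\<Sum>i\<in>{1..T}. if a i \<omega> then l * (of_bool (V i \<omega>) - p) - l\<^sup>2/8 else 0)" for \<omega>
    have dF: "dep T F" unfolding F_def by (rule dep_comp[OF dep_sum]) (rule dep_comp2[OF dai dVi])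
    have "measure M U * exp (2 * \<epsilon>\<^sup>2 * m) \<le> (\<integral>\<omega>. F \<omega> \<partial>M)"
    proof (rule markov_exp[OF Us dep_int[OF dF]])
      show "0 \<le> F \<omega>" for \<omega> by (simp add: F_def)
      fix \<omega> assume "\<omega> \<in> U"
      then have K: "K \<omega> = m" and S: "\<epsilon> * (\<epsilon> * m) \<le> l * S \<omega> / 4" by (auto simp: U_def)
      have "2 * \<epsilon>\<^sup>2 * m \<le> l * S \<omega> - l\<^sup>2/8 * K \<omega>"
      proof -
        have "l\<^sup>2/8 * K \<omega> = 2 * \<epsilon>\<^sup>2 * m" using K l by simp
        moreover have "4 * (\<epsilon>\<^sup>2 * m) \<le> l * S \<omega>" using S by (simp add: power2_eq_square)
        ultimately show ?thesis by linarith
      qed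
      then show "exp (2 * \<epsilon>\<^sup>2 * m) \<le> F \<omega>" unfolding F_def ident by (rule exp_mono)
    qed
    also have "\<dots> \<le> 1" unfolding F_def by (rule supermart[OF p depa depV step])
    finally have "measure M U * exp (2 * \<epsilon>\<^sup>2 * m) \<le> 1" .
    then have "measure M U \<le> 1 / exp (2 * \<epsilon>\<^sup>2 * m)" by (simp add: pos_le_divide_eq)
    moreover have "1 / exp (2 * \<epsilon>\<^sup>2 * m) = exp (-2 * \<epsilon>\<^sup>2 * m)"
    proof -
      have "exp (-2 * \<epsilon>\<^sup>2 * m) * exp (2 * \<epsilon>\<^sup>2 * m) = 1" by (simp add: exp_add[symmetric])
      then show ?thesis by (simp add: field_simps)
    qed
    ultimately show ?thesis by (simp add: U_def)
  qed
  have b1: "measure M {\<omega>\<in>space M. K \<omega> = real m \<and> \<epsilon> * (\<epsilon> * m) \<le> (4 * \<epsilon>) * S \<omega> / 4} \<le> exp (-2 * \<epsilon>\<^sup>2 * m)"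
    by (rule bound) (simp add: power2_eq_square)
  have b2: "measure M {\<omega>\<in>space M. K \<omega> = real m \<and> \<epsilon> * (\<epsilon> * m) \<le> (- 4 * \<epsilon>) * S \<omega> / 4} \<le> exp (-2 * \<epsilon>\<^sup>2 * m)"
    by (rule bound) (simp add: power2_eq_square)
  define U1 where "U1 = {\<omega>\<in>space M. K \<omega> = real m \<and> \<epsilon> * (\<epsilon> * m) \<le> (4 * \<epsilon>) * S \<omega> / 4}"
  define U2 where "U2 = {\<omega>\<in>space M. K \<omega> = real m \<and> \<epsilon> * (\<epsilon> * m) \<le> (- 4 * \<epsilon>) * S \<omega> / 4}"
  have U1s: "U1 \<in> sets M" unfolding U1_def by (rule dep_sets) (rule dep_comp2[OF dK dS])
  have U2s: "U2 \<in> sets M" unfolding U2_def by (rule dep_sets) (rule dep_comp2[OF dK dS])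
  have sub: "{\<omega>\<in>space M. K \<omega> = real m \<and> \<epsilon> * m < \<bar>S \<omega>\<bar>} \<subseteq> U1 \<union> U2"
  proof
    fix \<omega> assume w: "\<omega> \<in> {\<omega>\<in>space M. K \<omega> = real m \<and> \<epsilon> * m < \<bar>S \<omega>\<bar>}"
    then have sp: "\<omega> \<in> space M" and K: "K \<omega> = real m" and lt: "\<epsilon> * m < \<bar>S \<omega>\<bar>" by auto
    show "\<omega> \<in> U1 \<union> U2"
    proof (cases "S \<omega> \<ge> 0")
      case True
      then have "\<epsilon> * m \<le> S \<omega>" using lt by linarith
      then have "\<epsilon> * (\<epsilon> * m) \<le> \<epsilon> * S \<omega>" by (rule mult_left_mono[OF _ eps])
      then have "\<omega> \<in> U1" unfolding U1_def using sp K by simp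
      then show ?thesis by blast
    next
      case False
      then have "\<epsilon> * m \<le> - S \<omega>" using lt by linarith
      then have "\<epsilon> * (\<epsilon> * m) \<le> \<epsilon> * (- S \<omega>)" by (rule mult_left_mono[OF _ eps])
      then have "\<omega> \<in> U2" unfolding U2_def using sp K by simp
      then show ?thesis by blast
    qed
  qed
  have "measure M {\<omega>\<in>space M. K \<omega> = real m \<and> \<epsilon> * m < \<bar>S \<omega>\<bar>} \<le> measure M (U1 \<union> U2)"
    by (rule finite_measure_mono[OF sub]) (use U1s U2s in auto)
  also have "\<dots> \<le> measure M U1 + measure M U2"
    by (rule measure_Un_le[OF U1s U2s])
  also have "\<dots> \<le> 2 * exp (-2 * \<epsilon>\<^sup>2 * m)" using b1 b2 unfolding U1_def U2_def by simp
  finally show ?thesis unfolding K_def S_def .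
qed

end



lemma card_sum_bool: "real (card {n \<in> {1..m::nat}. P n}) = (\<Sum>n\<in>{1..m}. of_bool (P n))"
proof -
  have "{n \<in> {1..m::nat}. P n} = {1..m} \<inter> {n. P n}" by auto
  then show ?thesis by simp
qed

lemma cnt_Suc: "cnt_xz X Z (Suc T) x z \<omega> = cnt_xz X Z T x z \<omega> + (if X (Suc T) \<omega> = x \<and> Z (Suc T) \<omega> = z then 1 else 0)"
proof -
  have "{n \<in> {1..Suc T}. X n \<omega> = x \<and> Z n \<omega> = z} =
        {n \<in> {1..T}. X n \<omega> = x \<and> Z n \<omega> = z} \<union> (if X (Suc T) \<omega> = x \<and> Z (Suc T) \<omega> = z then {Suc T} else {})"
    by (auto simp: le_Suc_eq)
  then show ?thesis unfolding cnt_xz_def by (simp add: card_insert_if)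
qed

lemma cnt_0: "cnt_xz X Z 0 x z \<omega> = 0"
  by (simp add: cnt_xz_def)

lemma cnt_cong: "(\<And>n. n \<in> {1..k} \<Longrightarrow> X n \<omega> = X n \<omega>' \<and> Z n \<omega> = Z n \<omega>') \<Longrightarrow>
   cnt_xz X Z k x z \<omega> = cnt_xz X Z k x z \<omega>'"
  unfolding cnt_xz_def by (intro arg_cong[where f=card] Collect_cong) auto

lemma cnt_le: "cnt_xz X Z k x z \<omega> \<le> k"
proof -
  have "cnt_xz X Z k x z \<omega> \<le> card {1..k}" unfolding cnt_xz_def by (rule card_mono) auto
  then show ?thesis by simp
qed

lemma cntz_le: "cnt_z Z k z \<omega> \<le> k"
proof -
  have "cnt_z Z k z \<omega> \<le> card {1..k}" unfolding cnt_z_def by (rule card_mono) auto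
  then show ?thesis by simp
qed

context setting begin

lemma Z_bound:
  fixes m :: nat and \<epsilon> :: real and z :: 'z
  assumes eps: "0 \<le> \<epsilon>"
  shows "measure M {\<omega>\<in>space M. \<epsilon> * m < \<bar>real (cnt_z Z m z \<omega>) - m * pmf \<pi> z\<bar>} \<le> 2 * exp (-2 * \<epsilon>\<^sup>2 * m)"
proof -
  define a where "a i \<omega> = (i \<le> m)" for i and \<omega> :: 'w
  define V where "V i \<omega> = (Z i \<omega> = z)" for i \<omega>
  have ch: "measure M {\<omega>\<in>space M. (\<Sum>i\<in>{1..m}. of_bool (a i \<omega>)) = real m \<and>
            \<epsilon> * m < \<bar>\<Sum>i\<in>{1..m}. of_bool (a i \<omega>) * (of_bool (V i \<omega>) - pmf \<pi> z)\<bar>}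
         \<le> 2 * exp (-2 * \<epsilon>\<^sup>2 * m)"
  proof (rule chernoff[OF _ _ _ _ _ eps])
    show "0 \<le> pmf \<pi> z" "pmf \<pi> z \<le> 1" by (simp_all add: pmf_le_1)
    show "dep i (a i)" for i unfolding dep_def a_def by simp
    show "dep i (V i)" if "1 \<le> i" for i unfolding dep_def V_def using that by (metis atLeastAtMost_iff order_refl)
    fix T and G :: "'w \<Rightarrow> real" assume G: "dep T G"
    have "(\<integral>\<omega>. (G \<omega> * of_bool (a (Suc T) \<omega>)) * of_bool (Z (Suc T) \<omega> = z) \<partial>M)
          = pmf \<pi> z * (\<integral>\<omega>. G \<omega> * of_bool (a (Suc T) \<omega>) \<partial>M)"
    proof (rule keyZ)
      fix \<omega> \<omega>' assume h: "hist X Y Z (Suc T) \<omega> = hist X Y Z (Suc T) \<omega>'"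
      show "G \<omega> * of_bool (a (Suc T) \<omega>) = G \<omega>' * of_bool (a (Suc T) \<omega>')"
        using dep_hist[OF G h] by (simp add: a_def)
    qed simp
    then show "(\<integral>\<omega>. G \<omega> * of_bool (a (Suc T) \<omega>) * of_bool (V (Suc T) \<omega>) \<partial>M) = pmf \<pi> z * (\<integral>\<omega>. G \<omega> * of_bool (a (Suc T) \<omega>) \<partial>M)"
      by (simp add: V_def)
  qed
  have eqK: "(\<Sum>i\<in>{1..m}. of_bool (a i \<omega>) :: real) = real m" for \<omega> by (simp add: a_def)
  have eqS: "(\<Sum>i\<in>{1..m}. of_bool (a i \<omega>) * (of_bool (V i \<omega>) - pmf \<pi> z)) = real (cnt_z Z m z \<omega>) - m * pmf \<pi> z" for \<omega>
  proof -
    have "(\<Sum>i\<in>{1..m}. of_bool (a i \<omega>) * (of_bool (V i \<omega>) - pmf \<pi> z)) = (\<Sum>i\<in>{1..m}. of_bool (Z i \<omega> = z) - pmf \<pi> z)"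
      by (rule sum.cong) (auto simp: a_def V_def)
    also have "\<dots> = (\<Sum>i\<in>{1..m}. of_bool (Z i \<omega> = z)) - m * pmf \<pi> z"
      by (simp add: sum_subtractf del: sum_of_bool_eq)
    also have "\<dots> = real (cnt_z Z m z \<omega>) - m * pmf \<pi> z"
      unfolding cnt_z_def card_sum_bool ..
    finally show ?thesis .
  qed
  show ?thesis using ch unfolding eqK eqS by simp
qed

definition aY :: "'x \<Rightarrow> 'z \<Rightarrow> nat \<Rightarrow> nat \<Rightarrow> 'w \<Rightarrow> bool" where
  "aY xt z m i \<omega> = (X i \<omega> = xt \<and> Z i \<omega> = z \<and> cnt_xz X Z (i - 1) xt z \<omega> < m)"

lemma K_min: "(\<Sum>i\<in>{1..T}. of_bool (aY xt z m i \<omega>) :: real) = real (min (cnt_xz X Z T xt z \<omega>) m)"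
proof (induction T)
  case 0 then show ?case by (simp add: cnt_0)
next
  case (Suc T)
  have "(\<Sum>i\<in>{1..Suc T}. of_bool (aY xt z m i \<omega>) :: real) = (\<Sum>i\<in>{1..T}. of_bool (aY xt z m i \<omega>)) + of_bool (aY xt z m (Suc T) \<omega>)"
    by (simp add: sum.cl_ivl_Suc del: sum_of_bool_eq)
  also have "\<dots> = real (min (cnt_xz X Z T xt z \<omega>) m) + of_bool (aY xt z m (Suc T) \<omega>)" by (simp only: Suc.IH)
  also have "\<dots> = real (min (cnt_xz X Z (Suc T) xt z \<omega>) m)"
    by (auto simp: aY_def cnt_Suc)
  finally show ?case .
qed

lemma dep_aY: "1 \<le> i \<Longrightarrow> dep i (aY xt z m i)"
  unfolding dep_def
proof (intro allI impI)
  fix \<omega> \<omega>' assume i: "1 \<le> i" and ag: "\<forall>j\<in>{1..i}. X j \<omega> = X j \<omega>' \<and> Y j \<omega> = Y j \<omega>' \<and> Z j \<omega> = Z j \<omega>'"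
  have "cnt_xz X Z (i - 1) xt z \<omega> = cnt_xz X Z (i - 1) xt z \<omega>'"
    by (rule cnt_cong) (use ag in auto)
  moreover have "X i \<omega> = X i \<omega>'" "Z i \<omega> = Z i \<omega>'" using ag i by auto
  ultimately show "aY xt z m i \<omega> = aY xt z m i \<omega>'" by (simp add: aY_def)
qed

lemma dep_Yi: "1 \<le> i \<Longrightarrow> dep i (\<lambda>\<omega>. Y i \<omega> = y)"
  unfolding dep_def by (metis atLeastAtMost_iff order_refl)

lemma stepY:
  assumes G: "dep T (G :: 'w \<Rightarrow> real)"
  shows "(\<integral>\<omega>. G \<omega> * of_bool (aY xt z m (Suc T) \<omega>) * of_bool (Y (Suc T) \<omega> = y) \<partial>M)
       = pmf (q xt z) y * (\<integral>\<omega>. G \<omega> * of_bool (aY xt z m (Suc T) \<omega>) \<partial>M)"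
proof -
  have "(\<integral>\<omega>. (G \<omega> * of_bool (aY xt z m (Suc T) \<omega>)) * of_bool (Y (Suc T) \<omega> = y) \<partial>M)
      = (\<integral>\<omega>. (G \<omega> * of_bool (aY xt z m (Suc T) \<omega>)) * pmf (q (X (Suc T) \<omega>) (Z (Suc T) \<omega>)) y \<partial>M)"
  proof (rule keyY)
    fix \<omega> \<omega>' assume w: "Wf (Suc T) \<omega> = Wf (Suc T) \<omega>'"
    then have h: "hist X Y Z (Suc T) \<omega> = hist X Y Z (Suc T) \<omega>'" and xz: "X (Suc T) \<omega> = X (Suc T) \<omega>'" "Z (Suc T) \<omega> = Z (Suc T) \<omega>'"
      by (auto simp: Wf_def)
    have "cnt_xz X Z T xt z \<omega> = cnt_xz X Z T xt z \<omega>'"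
      by (rule cnt_cong) (use hist_eq[OF h] in blast)
    then have "aY xt z m (Suc T) \<omega> = aY xt z m (Suc T) \<omega>'" using xz by (simp add: aY_def)
    then show "G \<omega> * of_bool (aY xt z m (Suc T) \<omega>) = G \<omega>' * of_bool (aY xt z m (Suc T) \<omega>')"
      using dep_Wf[OF G w] by simp
  qed simp
  also have "\<dots> = (\<integral>\<omega>. pmf (q xt z) y * (G \<omega> * of_bool (aY xt z m (Suc T) \<omega>)) \<partial>M)"
    by (rule Bochner_Integration.integral_cong) (auto simp: aY_def)
  also have "\<dots> = pmf (q xt z) y * (\<integral>\<omega>. G \<omega> * of_bool (aY xt z m (Suc T) \<omega>) \<partial>M)"
    by simp
  finally show ?thesis by simp
qed

lemma Y_bound:
  fixes m :: nat and \<epsilon> :: real and z :: 'z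
  assumes eps: "0 \<le> \<epsilon>"
  shows "measure M {\<omega>\<in>space M. \<exists>T. (\<Sum>i\<in>{1..T}. of_bool (aY xt z m i \<omega>)) = real m \<and>
            \<epsilon> * m < \<bar>\<Sum>i\<in>{1..T}. of_bool (aY xt z m i \<omega>) * (of_bool (Y i \<omega> = y) - pmf (q xt z) y)\<bar>}
         \<le> 2 * exp (-2 * \<epsilon>\<^sup>2 * m)"
proof -
  define K where "K T \<omega> = (\<Sum>i\<in>{1..T}. of_bool (aY xt z m i \<omega>) :: real)" for T \<omega>
  define S where "S T \<omega> = (\<Sum>i\<in>{1..T}. of_bool (aY xt z m i \<omega>) * (of_bool (Y i \<omega> = y) - pmf (q xt z) y))" for T \<omega>
  define A where "A T = {\<omega>\<in>space M. K T \<omega> = real m \<and> \<epsilon> * m < \<bar>S T \<omega>\<bar>}" for T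
  have p: "0 \<le> pmf (q xt z) y" "pmf (q xt z) y \<le> 1" by (simp_all add: pmf_le_1)
  have bnd: "measure M (A T) \<le> 2 * exp (-2 * \<epsilon>\<^sup>2 * m)" for T
    unfolding A_def K_def S_def
    by (rule chernoff[OF p dep_aY dep_Yi stepY eps])
  have As: "A T \<in> sets M" for T
  proof -
    have dai: "dep T (aY xt z m i)" if "i \<in> {1..T}" for i using dep_mono[OF dep_aY] that by simp
    have dVi: "dep T (\<lambda>\<omega>. Y i \<omega> = y)" if "i \<in> {1..T}" for i using dep_mono[OF dep_Yi] that by simp
    have dK: "dep T (K T)" unfolding K_def by (rule dep_sum) (rule dep_comp[OF dai])
    have dS: "dep T (S T)" unfolding S_def by (rule dep_sum) (rule dep_comp2[OF dai dVi])
    show ?thesis unfolding A_def by (rule dep_sets) (rule dep_comp2[OF dK dS])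
  qed
  have inc: "A T \<subseteq> A (Suc T)" for T
  proof
    fix \<omega> assume w: "\<omega> \<in> A T"
    then have "K T \<omega> = m" by (simp add: A_def)
    then have "real (min (cnt_xz X Z T xt z \<omega>) m) = m" unfolding K_def K_min .
    then have "min (cnt_xz X Z T xt z \<omega>) m = m" by linarith
    then have na: "\<not> aY xt z m (Suc T) \<omega>" by (auto simp: aY_def min_def split: if_splits)
    have "K (Suc T) \<omega> = K T \<omega>" "S (Suc T) \<omega> = S T \<omega>"
      using na by (simp_all add: K_def S_def sum.cl_ivl_Suc del: sum_of_bool_eq sum_of_bool_mult_eq)
    then show "\<omega> \<in> A (Suc T)" using w by (simp add: A_def)
  qed
  have lim: "(\<lambda>T. measure M (A T)) \<longlonglongrightarrow> measure M (\<Union>T. A T)"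
    by (rule finite_Lim_measure_incseq) (use As inc in \<open>auto intro: incseq_SucI\<close>)
  have "measure M (\<Union>T. A T) \<le> 2 * exp (-2 * \<epsilon>\<^sup>2 * m)"
    by (rule LIMSEQ_le_const2[OF lim]) (use bnd in auto)
  moreover have "(\<Union>T. A T) = {\<omega>\<in>space M. \<exists>T. (\<Sum>i\<in>{1..T}. of_bool (aY xt z m i \<omega>)) = real m \<and>
            \<epsilon> * m < \<bar>\<Sum>i\<in>{1..T}. of_bool (aY xt z m i \<omega>) * (of_bool (Y i \<omega> = y) - pmf (q xt z) y)\<bar>}"
    unfolding A_def K_def S_def by auto
  ultimately show ?thesis by simp
qed

end



lemma flr2_small: "n < 2 \<Longrightarrow> flr2 n = 1"
  by (simp add: flr2_def)

lemma flr2_ge2: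
  assumes "2 \<le> n" shows "\<exists>j\<ge>1. flr2 n = 2 ^ j \<and> 2 ^ j \<le> n"
proof -
  let ?P = "\<lambda>k. 1 \<le> k \<and> 2 ^ k \<le> n"
  have P1: "?P 1" using assms by simp
  have bnd: "\<forall>k. ?P k \<longrightarrow> k \<le> n"
  proof (intro allI impI)
    fix k assume "?P k"
    then have "k < 2 ^ k" "2 ^ k \<le> n" by (simp_all add: less_exp)
    then show "k \<le> n" by linarith
  qed
  have "?P (GREATEST k. ?P k)" by (rule GreatestI_nat[where P="?P" and k=1 and b=n, OF P1]) (use bnd in blast)
  then show ?thesis using assms by (auto simp: flr2_def)
qed

lemma flr2_le: "1 \<le> n \<Longrightarrow> flr2 n \<le> n"
  using flr2_ge2[of n] flr2_small[of n] by (cases "n < 2") auto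

lemma flr2_one_iff: "flr2 n = 1 \<longleftrightarrow> n < 2"
proof
  assume "flr2 n = 1"
  show "n < 2"
  proof (rule ccontr)
    assume "\<not> n < 2"
    then have "2 \<le> n" by simp
    then obtain j where "j \<ge> 1" "flr2 n = 2 ^ j" using flr2_ge2[of n] by blast
    then have "(2::nat) ^ j \<ge> 2 ^ 1" by (intro power_increasing) auto
    then show False using \<open>flr2 n = 1\<close> \<open>flr2 n = 2 ^ j\<close> by simp
  qed
qed (rule flr2_small)

definition epsj :: "real \<Rightarrow> real \<Rightarrow> nat \<Rightarrow> real" where
  "epsj c \<delta> j = sqrt ((2 * ln (real j) + ln (6.6 * c / \<delta>)) / (2 * 2 ^ j))"

lemma rad_pow: "1 \<le> j \<Longrightarrow> rad c (2 ^ j) \<delta> = ereal (epsj c \<delta> j)"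
proof -
  assume j: "1 \<le> j"
  have ne: "(2::nat) ^ j \<noteq> 1" using j by (simp add: power_eq_1_iff)
  have "log 2 (real (2 ^ j)) = real j" by (simp add: log_nat_power)
  then show ?thesis using ne by (simp add: rad_def epsj_def)
qed

lemma epsj_arg:
  assumes j: "1 \<le> j" and c: "1 \<le> c" and d: "0 < \<delta>" "\<delta> < 1"
  shows "0 \<le> (2 * ln (real j) + ln (6.6 * c / \<delta>)) / (2 * 2 ^ j)"
proof -
  have "0 \<le> ln (real j)" using j by simp
  moreover have "1 \<le> 6.6 * c / \<delta>" using c d by (simp add: field_simps)
  then have "0 \<le> ln (6.6 * c / \<delta>)" by simp
  ultimately show ?thesis by simp
qed

lemma epsj_nonneg: "1 \<le> j \<Longrightarrow> 1 \<le> c \<Longrightarrow> 0 < \<delta> \<Longrightarrow> \<delta> < 1 \<Longrightarrow> 0 \<le> epsj c \<delta> j"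
  unfolding epsj_def using epsj_arg by simp

lemma epsj_exp:
  assumes j: "1 \<le> j" and c: "1 \<le> c" and d: "0 < \<delta>" "\<delta> < 1"
  shows "exp (-2 * (epsj c \<delta> j)\<^sup>2 * real (2 ^ j)) = \<delta> / (6.6 * c * (real j)\<^sup>2)"
proof -
  have sq: "(epsj c \<delta> j)\<^sup>2 = (2 * ln (real j) + ln (6.6 * c / \<delta>)) / (2 * 2 ^ j)"
    unfolding epsj_def using epsj_arg[OF assms] by simp
  have "-2 * (epsj c \<delta> j)\<^sup>2 * real (2 ^ j) = - (2 * ln (real j)) - ln (6.6 * c / \<delta>)"
    unfolding sq by (simp add: field_simps)
  then have "exp (-2 * (epsj c \<delta> j)\<^sup>2 * real (2 ^ j)) = exp (- (2 * ln (real j))) / exp (ln (6.6 * c / \<delta>))"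
    by (simp add: exp_diff)
  also have "exp (ln (6.6 * c / \<delta>)) = 6.6 * c / \<delta>" using c d by simp
  also have "exp (- (2 * ln (real j))) = 1 / (real j)\<^sup>2"
  proof -
    have "exp (2 * ln (real j)) = exp (ln (real j)) * exp (ln (real j))" unfolding mult_2 by (rule exp_add)
    also have "\<dots> = (real j)\<^sup>2" using j by (simp add: power2_eq_square)
    finally have "exp (2 * ln (real j)) = (real j)\<^sup>2" .
    then show ?thesis by (simp add: exp_minus field_simps)
  qed
  also have "1 / (real j)\<^sup>2 / (6.6 * c / \<delta>) = \<delta> / (6.6 * c * (real j)\<^sup>2)"
    by (simp add: field_simps)
  finally show ?thesis .
qed

lemma prod_err:
  fixes a b p \<pi>z e1 e2 :: real
  assumes a: "0 \<le> a" "a \<le> 1" and b: "0 \<le> b" "b \<le> 1"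
    and h1: "\<bar>a - \<pi>z\<bar> \<le> e1" and h2: "\<bar>p - b\<bar> \<le> e2"
  shows "\<bar>a * p - b * \<pi>z\<bar> \<le> e1 + e2"
proof -
  have eq: "a * p - b * \<pi>z = a * (p - b) + b * (a - \<pi>z)" by (simp add: algebra_simps)
  have "\<bar>a * (p - b)\<bar> \<le> 1 * e2" unfolding abs_mult using a h2 by (intro mult_mono) auto
  moreover have "\<bar>b * (a - \<pi>z)\<bar> \<le> 1 * e1" unfolding abs_mult using b h1 by (intro mult_mono) auto
  ultimately show ?thesis unfolding eq by (smt (verit))
qed

lemma rad_nonneg:
  assumes c: "1 \<le> c" and d: "0 < \<delta>" "\<delta> < 1"
  shows "0 \<le> rad c (flr2 k) \<delta>"
proof (cases "k < 2")
  case True then show ?thesis by (simp add: flr2_small rad_def)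
next
  case False
  then obtain j where j: "1 \<le> j" "flr2 k = 2 ^ j" using flr2_ge2[of k] by auto
  then show ?thesis using rad_pow[OF j(1)] epsj_nonneg[OF j(1) c d] by simp
qed

context setting begin

lemma py_card:
  assumes m: "m = flr2 (cnt_xz X Z N xt z \<omega>)"
  shows "{n \<in> {1..N}. cnt_xz X Z n xt z \<omega> \<le> m \<and> X n \<omega> = xt \<and> Y n \<omega> = y \<and> Z n \<omega> = z}
       = {n \<in> {1..N}. aY xt z m n \<omega> \<and> Y n \<omega> = y}"
proof (rule Collect_cong)
  fix n
  show "(n \<in> {1..N} \<and> cnt_xz X Z n xt z \<omega> \<le> m \<and> X n \<omega> = xt \<and> Y n \<omega> = y \<and> Z n \<omega> = z) =
        (n \<in> {1..N} \<and> aY xt z m n \<omega> \<and> Y n \<omega> = y)"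
  proof (cases "n \<in> {1..N}")
    case True
    then obtain k where k: "n = Suc k" by (cases n) auto
    show ?thesis using True unfolding k aY_def by (auto simp: cnt_Suc)
  qed auto
qed

lemma good_point:
  fixes \<delta> :: real and xt :: 'x and y :: 'y and \<omega> :: 'w and N :: nat
  assumes d: "0 < \<delta>" "\<delta> < 1" and N: "1 \<le> N"
    and hZ: "\<And>z j. 1 \<le> j \<Longrightarrow> \<bar>real (cnt_z Z (2^j) z \<omega>) - 2^j * pmf \<pi> z\<bar> \<le> epsj (real CARD('z)) \<delta> j * 2^j"
    and hY: "\<And>z j T. 1 \<le> j \<Longrightarrow> (\<Sum>i\<in>{1..T}. of_bool (aY xt z (2^j) i \<omega>)) = real (2^j) \<Longrightarrow>
        \<bar>\<Sum>i\<in>{1..T}. of_bool (aY xt z (2^j) i \<omega>) * (of_bool (Y i \<omega> = y) - pmf (q xt z) y)\<bar> \<le> epsj (real CARD('z)) \<delta> j * 2^j"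
  shows "ereal (\<Sum>z\<in>UNIV. pmf (q xt z) y * pmf \<pi> z)
              \<in> {ereal (m_est X Y Z N xt y \<omega>) - h_est X Z \<delta> N xt \<omega>
                  .. ereal (m_est X Y Z N xt y \<omega>) + h_est X Z \<delta> N xt \<omega>}"
proof -
  define c where "c = real CARD('z)"
  have c1: "1 \<le> c" unfolding c_def by simp
  have radnn: "0 \<le> rad c (flr2 k) \<delta>" for k by (rule rad_nonneg[OF c1 d])
  show ?thesis
  proof (cases "N < 2 \<or> (\<exists>z. cnt_xz X Z N xt z \<omega> < 2)")
    case True
    have "h_est X Z \<delta> N xt \<omega> = \<infinity>"
    proof (cases "N < 2")
      case True
      then have "rad c (flr2 N) \<delta> = \<infinity>" by (simp add: flr2_small rad_def)
      moreover have "0 \<le> (\<Sum>z\<in>UNIV. rad c (flr2 (cnt_xz X Z N xt z \<omega>)) \<delta>)"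
        by (rule sum_nonneg) (rule radnn)
      ultimately show ?thesis using c1 unfolding h_est_def c_def by auto
    next
      case False
      with True obtain z0 where z0: "cnt_xz X Z N xt z0 \<omega> < 2" by auto
      have "rad c (flr2 (cnt_xz X Z N xt z0 \<omega>)) \<delta> = \<infinity>" using z0 by (simp add: flr2_small rad_def)
      then have "(\<Sum>z\<in>UNIV. rad c (flr2 (cnt_xz X Z N xt z \<omega>)) \<delta>) = \<infinity>"
        by (subst sum_Pinfty) auto
      moreover have "0 \<le> ereal c * rad c (flr2 N) \<delta>" using c1 radnn by simp
      ultimately show ?thesis unfolding h_est_def c_def by auto
    qed
    then show ?thesis by simp
  next
    case False
    then have N2: "2 \<le> N" and cz2': "\<forall>z. \<not> cnt_xz X Z N xt z \<omega> < 2" by auto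
    have cz2: "2 \<le> cnt_xz X Z N xt z \<omega>" for z using cz2' by (simp add: not_less)
    obtain jN where jN: "1 \<le> jN" "flr2 N = 2 ^ jN" "2 ^ jN \<le> N" using flr2_ge2[OF N2] by auto
    define jz where "jz z = (SOME j. 1 \<le> j \<and> flr2 (cnt_xz X Z N xt z \<omega>) = 2 ^ j \<and> 2 ^ j \<le> cnt_xz X Z N xt z \<omega>)" for z
    have jz: "1 \<le> jz z \<and> flr2 (cnt_xz X Z N xt z \<omega>) = 2 ^ jz z \<and> 2 ^ jz z \<le> cnt_xz X Z N xt z \<omega>" for z
      unfolding jz_def by (rule someI_ex) (rule flr2_ge2[OF cz2])
    define eN where "eN = epsj c \<delta> jN"
    define ez where "ez z = epsj c \<delta> (jz z)" for z
    have h: "h_est X Z \<delta> N xt \<omega> = ereal (c * eN + (\<Sum>z\<in>UNIV. ez z))"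
      unfolding h_est_def c_def[symmetric] eN_def ez_def using jN jz by (simp add: rad_pow)
    define pz where "pz z = p_z_est Z N z \<omega>" for z
    define py where "py z = p_y_est X Y Z N y xt z \<omega>" for z
    have pz01: "0 \<le> pz z" "pz z \<le> 1" for z
      unfolding pz_def p_z_est_def using cntz_le[of Z "flr2 N" z \<omega>] by (auto simp: divide_le_eq_1)
    have q01: "0 \<le> pmf (q xt z) y" "pmf (q xt z) y \<le> 1" for z by (simp_all add: pmf_le_1)
    have ez_b: "\<bar>pz z - pmf \<pi> z\<bar> \<le> eN" for z
    proof -
      have "\<bar>real (cnt_z Z (2^jN) z \<omega>) - 2^jN * pmf \<pi> z\<bar> \<le> eN * 2^jN"
        using hZ[OF jN(1), of z] unfolding eN_def c_def .
      moreover have "pz z - pmf \<pi> z = (real (cnt_z Z (2^jN) z \<omega>) - 2^jN * pmf \<pi> z) / 2^jN"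
        unfolding pz_def p_z_est_def jN(2) by (simp add: field_simps)
      ultimately show ?thesis by (simp add: abs_divide divide_le_eq)
    qed
    have ey_b: "\<bar>py z - pmf (q xt z) y\<bar> \<le> ez z" for z
    proof -
      define m where "m = flr2 (cnt_xz X Z N xt z \<omega>)"
      have m: "m = 2 ^ jz z" "1 \<le> jz z" "m \<le> cnt_xz X Z N xt z \<omega>" using jz[of z] by (auto simp: m_def)
      have K: "(\<Sum>i\<in>{1..N}. of_bool (aY xt z m i \<omega>)) = real m"
        unfolding K_min using m by simp
      have S: "\<bar>\<Sum>i\<in>{1..N}. of_bool (aY xt z m i \<omega>) * (of_bool (Y i \<omega> = y) - pmf (q xt z) y)\<bar> \<le> ez z * m"
        using hY[OF m(2), of z N] K unfolding m(1) ez_def c_def by simp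
      have "(\<Sum>i\<in>{1..N}. of_bool (aY xt z m i \<omega>) * (of_bool (Y i \<omega> = y) - pmf (q xt z) y))
          = (\<Sum>i\<in>{1..N}. of_bool (aY xt z m i \<omega> \<and> Y i \<omega> = y)) - (\<Sum>i\<in>{1..N}. of_bool (aY xt z m i \<omega>)) * pmf (q xt z) y"
      proof -
        have "(\<Sum>i\<in>{1..N}. of_bool (aY xt z m i \<omega>) * (of_bool (Y i \<omega> = y) - pmf (q xt z) y))
            = (\<Sum>i\<in>{1..N}. of_bool (aY xt z m i \<omega> \<and> Y i \<omega> = y) - of_bool (aY xt z m i \<omega>) * pmf (q xt z) y)"
          by (rule sum.cong) auto
        also have "\<dots> = (\<Sum>i\<in>{1..N}. of_bool (aY xt z m i \<omega> \<and> Y i \<omega> = y)) - (\<Sum>i\<in>{1..N}. of_bool (aY xt z m i \<omega>)) * pmf (q xt z) y"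
          unfolding sum_subtractf sum_distrib_right ..
        finally show ?thesis .
      qed
      also have "\<dots> = real (card {n \<in> {1..N}. aY xt z m n \<omega> \<and> Y n \<omega> = y}) - real m * pmf (q xt z) y"
        unfolding K card_sum_bool ..
      also have "card {n \<in> {1..N}. aY xt z m n \<omega> \<and> Y n \<omega> = y} = card {n \<in> {1..N}. cnt_xz X Z n xt z \<omega> \<le> m \<and> X n \<omega> = xt \<and> Y n \<omega> = y \<and> Z n \<omega> = z}"
        using py_card[OF m_def] by simp
      finally have "\<bar>real (card {n \<in> {1..N}. cnt_xz X Z n xt z \<omega> \<le> m \<and> X n \<omega> = xt \<and> Y n \<omega> = y \<and> Z n \<omega> = z}) - real m * pmf (q xt z) y\<bar> \<le> ez z * m"
        using S by simp
      moreover have "py z - pmf (q xt z) y = (real (card {n \<in> {1..N}. cnt_xz X Z n xt z \<omega> \<le> m \<and> X n \<omega> = xt \<and> Y n \<omega> = y \<and> Z n \<omega> = z}) - real m * pmf (q xt z) y) / m"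
        unfolding py_def p_y_est_def m_def[symmetric] using m by (simp add: field_simps)
      moreover have "0 < real m" using m by simp
      ultimately show ?thesis by (simp add: abs_divide divide_le_eq)
    qed
    have "\<bar>m_est X Y Z N xt y \<omega> - (\<Sum>z\<in>UNIV. pmf (q xt z) y * pmf \<pi> z)\<bar>
        = \<bar>\<Sum>z\<in>UNIV. pz z * py z - pmf (q xt z) y * pmf \<pi> z\<bar>"
      unfolding m_est_def pz_def py_def by (simp add: sum_subtractf)
    also have "\<dots> \<le> (\<Sum>z\<in>UNIV. \<bar>pz z * py z - pmf (q xt z) y * pmf \<pi> z\<bar>)" by (rule sum_abs)
    also have "\<dots> \<le> (\<Sum>z\<in>UNIV. eN + ez z)"
      by (rule sum_mono) (rule prod_err[OF pz01 q01 ez_b ey_b])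
    also have "\<dots> = c * eN + (\<Sum>z\<in>UNIV. ez z)" by (simp add: sum.distrib c_def)
    finally have "\<bar>m_est X Y Z N xt y \<omega> - (\<Sum>z\<in>UNIV. pmf (q xt z) y * pmf \<pi> z)\<bar> \<le> c * eN + (\<Sum>z\<in>UNIV. ez z)" .
    then show ?thesis unfolding h by (simp add: abs_le_iff)
  qed
qed

end

lemma cond_dep:
  assumes N: "1 \<le> N" and ag: "\<forall>i\<in>{1..N}. X i \<omega> = X i \<omega>' \<and> Y i \<omega> = Y i \<omega>' \<and> Z i \<omega> = Z i \<omega>'"
  shows "m_est X Y Z N xt y \<omega> = m_est X Y Z N xt y \<omega>' \<and> h_est X Z \<delta> N xt \<omega> = h_est X Z \<delta> N xt \<omega>'"
proof -
  have cx: "cnt_xz X Z n xt z \<omega> = cnt_xz X Z n xt z \<omega>'" if "n \<le> N" for n z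
    by (rule cnt_cong) (use ag that in auto)
  have cz: "cnt_z Z (flr2 N) z \<omega> = cnt_z Z (flr2 N) z \<omega>'" for z
    unfolding cnt_z_def
  proof (intro arg_cong[where f=card] Collect_cong)
    fix n show "(n \<in> {1..flr2 N} \<and> Z n \<omega> = z) = (n \<in> {1..flr2 N} \<and> Z n \<omega>' = z)"
      using ag flr2_le[OF N] by auto
  qed
  have py: "p_y_est X Y Z N y xt z \<omega> = p_y_est X Y Z N y xt z \<omega>'" for z
    unfolding p_y_est_def cx[OF order_refl]
  proof (intro arg_cong2[where f="(/)"] arg_cong[where f=real] arg_cong[where f=card] Collect_cong refl)
    fix n show "(n \<in> {1..N} \<and> cnt_xz X Z n xt z \<omega> \<le> flr2 (cnt_xz X Z N xt z \<omega>') \<and> X n \<omega> = xt \<and> Y n \<omega> = y \<and> Z n \<omega> = z) =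
          (n \<in> {1..N} \<and> cnt_xz X Z n xt z \<omega>' \<le> flr2 (cnt_xz X Z N xt z \<omega>') \<and> X n \<omega>' = xt \<and> Y n \<omega>' = y \<and> Z n \<omega>' = z)"
      using ag cx[of n z] by auto
  qed
  have "m_est X Y Z N xt y \<omega> = m_est X Y Z N xt y \<omega>'"
    unfolding m_est_def p_z_est_def cz py ..
  moreover have "h_est X Z \<delta> N xt \<omega> = h_est X Z \<delta> N xt \<omega>'"
    unfolding h_est_def cx[OF order_refl] ..
  ultimately show ?thesis ..
qed

context setting begin

lemma BY_sets: "{\<omega>\<in>space M. \<exists>T. (\<Sum>i\<in>{1..T}. of_bool (aY xt z m i \<omega>)) = (r::real) \<and>
            e < \<bar>\<Sum>i\<in>{1..T}. of_bool (aY xt z m i \<omega>) * (of_bool (Y i \<omega> = y) - p)\<bar>} \<in> sets M"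
proof -
  have "{\<omega>\<in>space M. (\<Sum>i\<in>{1..T}. of_bool (aY xt z m i \<omega>)) = r \<and>
            e < \<bar>\<Sum>i\<in>{1..T}. of_bool (aY xt z m i \<omega>) * (of_bool (Y i \<omega> = y) - p)\<bar>} \<in> sets M" for T
  proof -
    have dai: "dep T (aY xt z m i)" if "i \<in> {1..T}" for i using dep_mono[OF dep_aY] that by simp
    have dVi: "dep T (\<lambda>\<omega>. Y i \<omega> = y)" if "i \<in> {1..T}" for i using dep_mono[OF dep_Yi] that by simp
    have dK: "dep T (\<lambda>\<omega>. (\<Sum>i\<in>{1..T}. of_bool (aY xt z m i \<omega>) :: real))" by (rule dep_sum) (rule dep_comp[OF dai])
    have dS: "dep T (\<lambda>\<omega>. \<Sum>i\<in>{1..T}. of_bool (aY xt z m i \<omega>) * (of_bool (Y i \<omega> = y) - p))"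
      by (rule dep_sum) (rule dep_comp2[OF dai dVi])
    show ?thesis by (rule dep_sets) (rule dep_comp2[OF dK dS])
  qed
  then show ?thesis by (rule sets.sets_Collect_countable_Ex)
qed

lemma BZ_sets: "{\<omega>\<in>space M. e < \<bar>real (cnt_z Z k z \<omega>) - r\<bar>} \<in> sets M"
proof (rule dep_sets[where T=k])
  show "dep k (\<lambda>\<omega>. e < \<bar>real (cnt_z Z k z \<omega>) - r\<bar>)"
    unfolding dep_def cnt_z_def
  proof (intro allI impI)
    fix \<omega> \<omega>' assume ag: "\<forall>i\<in>{1..k}. X i \<omega> = X i \<omega>' \<and> Y i \<omega> = Y i \<omega>' \<and> Z i \<omega> = Z i \<omega>'"
    have "{n \<in> {1..k}. Z n \<omega> = z} = {n \<in> {1..k}. Z n \<omega>' = z}" using ag by auto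
    then show "(e < \<bar>real (card {n \<in> {1..k}. Z n \<omega> = z}) - r\<bar>) = (e < \<bar>real (card {n \<in> {1..k}. Z n \<omega>' = z}) - r\<bar>)"
      by simp
  qed
qed

lemma good_sets:
  "{\<omega> \<in> space M. \<forall>N\<ge>1.
            ereal (\<Sum>z\<in>UNIV. pmf (q xt z) y * pmf \<pi> z)
              \<in> {ereal (m_est X Y Z N xt y \<omega>) - h_est X Z \<delta> N xt \<omega>
                  .. ereal (m_est X Y Z N xt y \<omega>) + h_est X Z \<delta> N xt \<omega>}} \<in> sets M"
proof (rule sets.sets_Collect_countable_All)
  fix N :: nat
  show "{\<omega> \<in> space M. 1 \<le> N \<longrightarrow> ereal (\<Sum>z\<in>UNIV. pmf (q xt z) y * pmf \<pi> z)
              \<in> {ereal (m_est X Y Z N xt y \<omega>) - h_est X Z \<delta> N xt \<omega>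
                  .. ereal (m_est X Y Z N xt y \<omega>) + h_est X Z \<delta> N xt \<omega>}} \<in> sets M"
  proof (cases "1 \<le> N")
    case False then show ?thesis by simp
  next
    case True
    show ?thesis
    proof (rule dep_sets[where T=N])
      show "dep N (\<lambda>\<omega>. 1 \<le> N \<longrightarrow> ereal (\<Sum>z\<in>UNIV. pmf (q xt z) y * pmf \<pi> z)
              \<in> {ereal (m_est X Y Z N xt y \<omega>) - h_est X Z \<delta> N xt \<omega>
                  .. ereal (m_est X Y Z N xt y \<omega>) + h_est X Z \<delta> N xt \<omega>})"
        unfolding dep_def
      proof (intro allI impI)
        fix \<omega> \<omega>' assume ag: "\<forall>i\<in>{1..N}. X i \<omega> = X i \<omega>' \<and> Y i \<omega> = Y i \<omega>' \<and> Z i \<omega> = Z i \<omega>'"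
        from cond_dep[OF True ag, of xt y \<delta>] show "(1 \<le> N \<longrightarrow> ereal (\<Sum>z\<in>UNIV. pmf (q xt z) y * pmf \<pi> z)
              \<in> {ereal (m_est X Y Z N xt y \<omega>) - h_est X Z \<delta> N xt \<omega>
                  .. ereal (m_est X Y Z N xt y \<omega>) + h_est X Z \<delta> N xt \<omega>}) =
             (1 \<le> N \<longrightarrow> ereal (\<Sum>z\<in>UNIV. pmf (q xt z) y * pmf \<pi> z)
              \<in> {ereal (m_est X Y Z N xt y \<omega>') - h_est X Z \<delta> N xt \<omega>'
                  .. ereal (m_est X Y Z N xt y \<omega>') + h_est X Z \<delta> N xt \<omega>'})" by simp
      qed
    qed
  qed
qed

end

lemma pi_sq_bound: "4 / 6.6 * (pi\<^sup>2 / 6) \<le> (1::real)"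
proof -
  have "pi \<le> 3.1415926535899" by (rule pi_approx(2))
  then have "pi * pi \<le> 3.1415926535899 * 3.1415926535899"
    using pi_gt_zero by (intro mult_mono) auto
  then show ?thesis by (simp add: power2_eq_square)
qed

context setting begin

theorem main:
  fixes \<delta> :: real and xt :: 'x and y :: 'y
  assumes d0: "\<delta> > 0"
  shows "measure M {\<omega> \<in> space M. \<forall>N\<ge>1.
            ereal (\<Sum>z\<in>UNIV. pmf (q xt z) y * pmf \<pi> z)
              \<in> {ereal (m_est X Y Z N xt y \<omega>) - h_est X Z \<delta> N xt \<omega>
                  .. ereal (m_est X Y Z N xt y \<omega>) + h_est X Z \<delta> N xt \<omega>}}
         \<ge> 1 - \<delta>"
proof (cases "\<delta> < 1")
  case False
  then show ?thesis using measure_nonneg[of M] by (smt (verit))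
next
  case True
  define c where "c = real CARD('z)"
  have c1: "1 \<le> c" unfolding c_def by simp
  define e where "e j = epsj c \<delta> j" for j
  define BZ where "BZ z j = {\<omega>\<in>space M. e j * real (2^j) < \<bar>real (cnt_z Z (2^j) z \<omega>) - real (2^j) * pmf \<pi> z\<bar>}" for z j
  define BY where "BY z j = {\<omega>\<in>space M. \<exists>T. (\<Sum>i\<in>{1..T}. of_bool (aY xt z (2^j) i \<omega>)) = real (2^j) \<and>
            e j * real (2^j) < \<bar>\<Sum>i\<in>{1..T}. of_bool (aY xt z (2^j) i \<omega>) * (of_bool (Y i \<omega> = y) - pmf (q xt z) y)\<bar>}" for z j
  define U where "U j = (\<Union>z\<in>UNIV. BZ z (Suc j) \<union> BY z (Suc j))" for j
  define g where "g j = 4 * \<delta> / 6.6 * (1 / (real j + 1)\<^sup>2)" for j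
  have BZs: "BZ z j \<in> sets M" for z j unfolding BZ_def by (rule BZ_sets)
  have BYs: "BY z j \<in> sets M" for z j unfolding BY_def by (rule BY_sets)
  have Us: "U j \<in> sets M" for j unfolding U_def using BZs BYs by auto
  have eb: "2 * exp (-2 * (e j)\<^sup>2 * real (2^j)) = 2 * \<delta> / (6.6 * c * (real j)\<^sup>2)" if "1 \<le> j" for j
    unfolding e_def using epsj_exp[OF that c1 d0 True] by simp
  have e0: "0 \<le> e j" if "1 \<le> j" for j unfolding e_def by (rule epsj_nonneg[OF that c1 d0 True])
  have mBZ: "measure M (BZ z (Suc j)) \<le> 2 * \<delta> / (6.6 * c * (real (Suc j))\<^sup>2)" for z j
    using Z_bound[OF e0[of "Suc j"], of "2 ^ Suc j" z] eb[of "Suc j"] unfolding BZ_def by simp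
  have mBY: "measure M (BY z (Suc j)) \<le> 2 * \<delta> / (6.6 * c * (real (Suc j))\<^sup>2)" for z j
    using Y_bound[OF e0[of "Suc j"], of xt z "2 ^ Suc j"] eb[of "Suc j"] unfolding BY_def by simp
  have mU: "measure M (U j) \<le> g j" for j
  proof -
    have "measure M (U j) \<le> (\<Sum>z\<in>UNIV. measure M (BZ z (Suc j) \<union> BY z (Suc j)))"
      unfolding U_def by (rule finite_measure_subadditive_finite) (use BZs BYs in auto)
    also have "\<dots> \<le> (\<Sum>z\<in>(UNIV::'z set). 2 * (2 * \<delta> / (6.6 * c * (real (Suc j))\<^sup>2)))"
    proof (rule sum_mono)
      fix z
      have "measure M (BZ z (Suc j) \<union> BY z (Suc j)) \<le> measure M (BZ z (Suc j)) + measure M (BY z (Suc j))"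
        by (rule measure_Un_le[OF BZs BYs])
      then show "measure M (BZ z (Suc j) \<union> BY z (Suc j)) \<le> 2 * (2 * \<delta> / (6.6 * c * (real (Suc j))\<^sup>2))"
        using mBZ[of z j] mBY[of z j] by linarith
    qed
    also have "\<dots> = c * (2 * (2 * \<delta> / (6.6 * c * (real (Suc j))\<^sup>2)))" by (simp add: c_def)
    also have "\<dots> = g j" using c1 unfolding g_def by (simp add: field_simps)
    finally show ?thesis .
  qed
  have gs: "g sums (4 * \<delta> / 6.6 * (pi\<^sup>2 / 6))"
    unfolding g_def by (rule sums_mult) (use inverse_squares_sums in \<open>simp add: add.commute\<close>)
  have sumU: "summable (\<lambda>j. measure M (U j))"
    by (rule summable_comparison_test'[where N=0, OF sums_summable[OF gs]]) (use mU in simp)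
  have "measure M (\<Union>j. U j) \<le> (\<Sum>j. measure M (U j))"
    by (rule finite_measure_subadditive_countably) (use Us sumU in auto)
  also have "\<dots> \<le> (\<Sum>j. g j)" by (rule suminf_le[OF mU sumU sums_summable[OF gs]])
  also have "\<dots> = 4 * \<delta> / 6.6 * (pi\<^sup>2 / 6)" using gs by (rule sums_unique[symmetric])
  also have "\<dots> \<le> \<delta>"
  proof -
    have "4 * \<delta> / 6.6 * (pi\<^sup>2 / 6) = \<delta> * (4 / 6.6 * (pi\<^sup>2 / 6))" by simp
    also have "\<dots> \<le> \<delta> * 1" by (rule mult_left_mono[OF pi_sq_bound]) (use d0 in simp)
    finally show ?thesis by simp
  qed
  finally have mBad: "measure M (\<Union>j. U j) \<le> \<delta>" .
  have Bads: "(\<Union>j. U j) \<in> sets M" using Us by auto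
  have sub: "space M - (\<Union>j. U j) \<subseteq> {\<omega> \<in> space M. \<forall>N\<ge>1.
            ereal (\<Sum>z\<in>UNIV. pmf (q xt z) y * pmf \<pi> z)
              \<in> {ereal (m_est X Y Z N xt y \<omega>) - h_est X Z \<delta> N xt \<omega>
                  .. ereal (m_est X Y Z N xt y \<omega>) + h_est X Z \<delta> N xt \<omega>}}"
  proof (intro subsetI)
    fix \<omega>
    assume w: "\<omega> \<in> space M - (\<Union>j. U j)"
    have nB: "\<omega> \<notin> BZ z j \<and> \<omega> \<notin> BY z j" if j: "1 \<le> j" for z j
    proof -
      obtain j' where j': "j = Suc j'" using j by (cases j) auto
      have "\<omega> \<notin> U j'" using w by auto
      then show ?thesis unfolding U_def j' by auto
    qed
    have "\<forall>N\<ge>1. ereal (\<Sum>z\<in>UNIV. pmf (q xt z) y * pmf \<pi> z)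
              \<in> {ereal (m_est X Y Z N xt y \<omega>) - h_est X Z \<delta> N xt \<omega>
                  .. ereal (m_est X Y Z N xt y \<omega>) + h_est X Z \<delta> N xt \<omega>}"
    proof (intro allI impI)
    fix N :: nat assume N: "1 \<le> N"
    show "ereal (\<Sum>z\<in>UNIV. pmf (q xt z) y * pmf \<pi> z)
              \<in> {ereal (m_est X Y Z N xt y \<omega>) - h_est X Z \<delta> N xt \<omega>
                  .. ereal (m_est X Y Z N xt y \<omega>) + h_est X Z \<delta> N xt \<omega>}"
    proof (rule good_point[OF d0 True N])
      fix z and j :: nat assume j: "1 \<le> j"
      then have "\<omega> \<notin> BZ z j" using nB by blast
      then show "\<bar>real (cnt_z Z (2^j) z \<omega>) - 2^j * pmf \<pi> z\<bar> \<le> epsj (real CARD('z)) \<delta> j * 2^j"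
        using w unfolding BZ_def e_def c_def by auto
    next
      fix z and j T :: nat assume j: "1 \<le> j" and K: "(\<Sum>i\<in>{1..T}. of_bool (aY xt z (2^j) i \<omega>)) = real (2^j)"
      from j have "\<omega> \<notin> BY z j" using nB by blast
      then show "\<bar>\<Sum>i\<in>{1..T}. of_bool (aY xt z (2^j) i \<omega>) * (of_bool (Y i \<omega> = y) - pmf (q xt z) y)\<bar> \<le> epsj (real CARD('z)) \<delta> j * 2^j"
        using w K unfolding BY_def e_def c_def by (auto simp: not_less)
    qed
    qed
    then show "\<omega> \<in> {\<omega> \<in> space M. \<forall>N\<ge>1.
            ereal (\<Sum>z\<in>UNIV. pmf (q xt z) y * pmf \<pi> z)
              \<in> {ereal (m_est X Y Z N xt y \<omega>) - h_est X Z \<delta> N xt \<omega>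
                  .. ereal (m_est X Y Z N xt y \<omega>) + h_est X Z \<delta> N xt \<omega>}}" using w by simp
  qed
  have "1 - \<delta> \<le> 1 - measure M (\<Union>j. U j)" using mBad by simp
  also have "\<dots> = measure M (space M - (\<Union>j. U j))" using prob_compl[OF Bads] by simp
  also have "\<dots> \<le> measure M {\<omega> \<in> space M. \<forall>N\<ge>1.
            ereal (\<Sum>z\<in>UNIV. pmf (q xt z) y * pmf \<pi> z)
              \<in> {ereal (m_est X Y Z N xt y \<omega>) - h_est X Z \<delta> N xt \<omega>
                  .. ereal (m_est X Y Z N xt y \<omega>) + h_est X Z \<delta> N xt \<omega>}}"
    by (rule finite_measure_mono[OF sub good_sets])
  finally show ?thesis .
qed

end


theorem theorem5:
  fixes M :: "'w measure"
    and X :: "nat \<Rightarrow> 'w \<Rightarrow> 'x::finite"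
    and Y :: "nat \<Rightarrow> 'w \<Rightarrow> 'y::finite"
    and Z :: "nat \<Rightarrow> 'w \<Rightarrow> 'z::finite"
    and \<pi> :: "'z pmf"
    and q :: "'x \<Rightarrow> 'z \<Rightarrow> 'y pmf"
    and \<delta> :: real and xt :: 'x and y :: 'y
  assumes "prob_space M"
    and X_meas: "\<And>n. X n \<in> measurable M (count_space UNIV)"
    and Y_meas: "\<And>n. Y n \<in> measurable M (count_space UNIV)"
    and Z_meas: "\<And>n. Z n \<in> measurable M (count_space UNIV)"
    and Z_cond: "\<And>n B z. n \<ge> 1 \<Longrightarrow>
        measure M {\<omega> \<in> space M. hist X Y Z n \<omega> \<in> B \<and> Z n \<omega> = z}
        = pmf \<pi> z * measure M {\<omega> \<in> space M. hist X Y Z n \<omega> \<in> B}"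
    and Y_cond: "\<And>n B y'. n \<ge> 1 \<Longrightarrow>
        measure M {\<omega> \<in> space M. (hist X Y Z n \<omega>, Z n \<omega>, X n \<omega>) \<in> B \<and> Y n \<omega> = y'}
        = (\<integral>\<omega>. indicator {\<omega> \<in> space M. (hist X Y Z n \<omega>, Z n \<omega>, X n \<omega>) \<in> B} \<omega>
                 * pmf (q (X n \<omega>) (Z n \<omega>)) y' \<partial>M)"
    and "\<delta> > 0"
  shows "measure M {\<omega> \<in> space M. \<forall>N\<ge>1.
            ereal (\<Sum>z\<in>UNIV. pmf (q xt z) y * pmf \<pi> z)
              \<in> {ereal (m_est X Y Z N xt y \<omega>) - h_est X Z \<delta> N xt \<omega>
                  .. ereal (m_est X Y Z N xt y \<omega>) + h_est X Z \<delta> N xt \<omega>}}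
         \<ge> 1 - \<delta>"
  proof -
  interpret S: setting M X Y Z \<pi> q
    by (rule setting.intro) (fact+)
  show ?thesis by (rule S.main) (fact)
qed

end
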